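(* Let $G=G(n,p)$ be an Erdős–Rényi random graph on vertex set $\{1,\dots,n\}$, and let $G'$ be obtained from $G$ by choosing an unordered pair of distinct vertices uniformly at random among the $\binom n2$ pairs and independently resampling the presence of the edge between them (present with probability $p$). Let $W,W'$ be the numbers of triangles in $G,G'$, and $Q_1(G)=\mathbb{P}[W'=W+1\mid G]$. Then \begin{align*} \mathrm{Var}\,Q_1(G)\le{}&\frac{n-2}{\binom n2}p^4(1-p)(1-p^2)^{n-3}\bigl(1-p^2(1-p)(1-p^2)^{n-3}\bigr)\\ &+\frac{4\binom{n-2}{2}}{\binom n2}p^5(1-p)^2\bigl((1-2p^2+p^3)^{n-4}-p(1-p^2)^{2n-6}\bigr)\\ &+\frac{4\binom{n-2}{2}}{\binom n2}p^5(1-p)^2(1-p^2)^{2n-8}\bigl(1-p-p(1-p^2)^2\bigr)\\ &+\frac{12\binom{n-2}{3}}{\binom n2}p^6(1-p)^2\bigl((1-p)^{n-3}(1+p-p^2)^{n-5}-(1-p^2)^{2n-6}\bigr)\\ &+\frac{12\binom{n-2}{3}}{\binom n2}p^6(1-p)^2(1-p^2)^{2n-9}\bigl(-2p+4p^2-3p^4+p^6\bigr)\\ &+\frac{3\binom{n-2}{3}}{\binom n2}p^6(1-p)^2(1-p^2)^{2n-10}\bigl(4p^3-7p^4+4p^6-p^8\bigr)\\ &+\frac{12\binom{n-2}{4}}{\binom n2}p^6(1-p)^2(1-p^2)^{2n-10}\bigl(4p^3-7p^4+4p^6-p^8\bigr). \end{align*}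
   Context: $G(n,p)$: each of the $\binom n2$ edges is present independently with probability $p$. A triangle is a set of three vertices that are pairwise adjacent. *)

theory Defs
  imports "HOL-Probability.Probability"
begin

definition vpairs :: "nat \<Rightarrow> nat set set" where
  "vpairs n = {e. e \<subseteq> {1..n} \<and> card e = 2}"

definition gnp :: "nat \<Rightarrow> real \<Rightarrow> nat set set pmf" where
  "gnp n p = map_pmf (\<lambda>f. {e \<in> vpairs n. f e})
                     (Pi_pmf (vpairs n) False (\<lambda>_. bernoulli_pmf p))"

definition triangles :: "nat \<Rightarrow> nat set set \<Rightarrow> nat" where
  "triangles n G = card {T. T \<subseteq> {1..n} \<and> card T = 3 \<and>
      (\<forall>x\<in>T. \<forall>y\<in>T. x \<noteq> y \<longrightarrow> {x, y} \<in> G)}"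

definition resample :: "nat \<Rightarrow> real \<Rightarrow> nat set set \<Rightarrow> nat set set pmf" where
  "resample n p G =
     do { e \<leftarrow> pmf_of_set (vpairs n);
          b \<leftarrow> bernoulli_pmf p;
          return_pmf (if b then insert e G else G - {e}) }"

definition Q1 :: "nat \<Rightarrow> real \<Rightarrow> nat set set \<Rightarrow> real" where
  "Q1 n p G = measure_pmf.prob (resample n p G)
                {G'. triangles n G' = triangles n G + 1}"

end

theory Submission
  imports Defs
begin

lemma finite_set_Pi_bool:
  assumes "finite A"
  shows "finite (set_pmf (Pi_pmf A (dflt::bool) D))"
proof -
  have "set_pmf (Pi_pmf A dflt D) \<subseteq> PiE_dflt A dflt (\<lambda>_. UNIV)"
    using set_Pi_pmf_subset'[OF assms, of dflt D] unfolding PiE_dflt_def by auto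
  moreover have "finite (PiE_dflt A dflt (\<lambda>_. (UNIV::bool set)))"
    using assms by (intro finite_PiE_dflt) auto
  ultimately show ?thesis by (rule finite_subset)
qed

lemma expectation_pair_prod:
  fixes f :: "'a \<Rightarrow> real" and g :: "'b \<Rightarrow> real"
  assumes "finite (set_pmf M)" "finite (set_pmf N)"
  shows "measure_pmf.expectation (pair_pmf M N) (\<lambda>z. f (fst z) * g (snd z))
       = measure_pmf.expectation M f * measure_pmf.expectation N g"
proof -
  have "measure_pmf.expectation (pair_pmf M N) (\<lambda>z. f (fst z) * g (snd z))
      = (\<Sum>z\<in>set_pmf M \<times> set_pmf N. f (fst z) * g (snd z) * pmf (pair_pmf M N) z)"
    using assms by (intro integral_measure_pmf_real) auto
  also have "\<dots> = (\<Sum>a\<in>set_pmf M. \<Sum>b\<in>set_pmf N. (f a * pmf M a) * (g b * pmf N b))"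
    by (simp add: sum.cartesian_product case_prod_beta mult_ac) (intro sum.cong refl, auto simp: pmf_pair)
  also have "\<dots> = (\<Sum>a\<in>set_pmf M. f a * pmf M a) * (\<Sum>b\<in>set_pmf N. g b * pmf N b)"
    by (simp add: sum_product)
  also have "\<dots> = measure_pmf.expectation M f * measure_pmf.expectation N g"
    using assms by (simp add: integral_measure_pmf_real)
  finally show ?thesis .
qed

definition dep :: "'a set \<Rightarrow> (('a \<Rightarrow> bool) \<Rightarrow> 'b) \<Rightarrow> bool" where
  "dep B g \<longleftrightarrow> (\<forall>y y'. (\<forall>x\<in>B. y x = y' x) \<longrightarrow> g y = g y')"

lemma depD: "dep B g \<Longrightarrow> (\<And>x. x \<in> B \<Longrightarrow> y x = y' x) \<Longrightarrow> g y = g y'"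
  by (simp add: dep_def)

lemma indep_split:
  fixes \<gamma> g :: "('a \<Rightarrow> bool) \<Rightarrow> real"
  assumes A: "finite A" and C: "C \<subseteq> A" and B: "B \<inter> C = {}"
    and dC: "dep C \<gamma>" and dB: "dep B g"
  shows "measure_pmf.expectation (Pi_pmf A False D) (\<lambda>y. \<gamma> y * g y)
       = measure_pmf.expectation (Pi_pmf C False D) \<gamma> *
         measure_pmf.expectation (Pi_pmf (A - C) False D) g"
proof -
  have fC: "finite C" using A C by (rule finite_subset[rotated])
  have AU: "A = C \<union> (A - C)" using C by auto
  have "Pi_pmf A False D = Pi_pmf (C \<union> (A - C)) False D" using AU by simp
  also have "\<dots> = map_pmf (\<lambda>(f,g) x. if x \<in> C then f x else g x)
             (pair_pmf (Pi_pmf C False D) (Pi_pmf (A - C) False D))"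
    using A fC by (intro Pi_pmf_union) auto
  finally have eq: "Pi_pmf A False D = \<dots>" .
  have "measure_pmf.expectation (Pi_pmf A False D) (\<lambda>y. \<gamma> y * g y)
     = measure_pmf.expectation (pair_pmf (Pi_pmf C False D) (Pi_pmf (A - C) False D))
         (\<lambda>z. \<gamma> (fst z) * g (snd z))"
  proof -
    have "\<gamma> ((\<lambda>(f,g) x. if x \<in> C then f x else g x) z) = \<gamma> (fst z)" for z
    proof -
      have "\<forall>x\<in>C. ((\<lambda>(f,g) x. if x \<in> C then f x else g x) z) x = fst z x"
        by (auto split: prod.splits)
      thus ?thesis by (intro depD[OF dC]) auto
    qed
    moreover have "g ((\<lambda>(f,g) x. if x \<in> C then f x else g x) z) = g (snd z)" for z
    proof -
      have "\<forall>x\<in>B. ((\<lambda>(f,g) x. if x \<in> C then f x else g x) z) x = snd z x"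
        using B by (auto split: prod.splits)
      thus ?thesis by (intro depD[OF dB]) auto
    qed
    ultimately show ?thesis by (simp add: eq)
  qed
  also have "\<dots> = measure_pmf.expectation (Pi_pmf C False D) \<gamma> *
         measure_pmf.expectation (Pi_pmf (A - C) False D) g"
    using A fC by (intro expectation_pair_prod finite_set_Pi_bool) auto
  finally show ?thesis .
qed

lemma dep_const: "dep B (\<lambda>_. c)" by (simp add: dep_def)

lemma indep2:
  fixes \<gamma> g :: "('a \<Rightarrow> bool) \<Rightarrow> real"
  assumes A: "finite A" and C: "C \<subseteq> A" and B: "B \<inter> C = {}"
    and dC: "dep C \<gamma>" and dB: "dep B g"
  shows "measure_pmf.expectation (Pi_pmf A False D) (\<lambda>y. \<gamma> y * g y)
       = measure_pmf.expectation (Pi_pmf A False D) \<gamma> *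
         measure_pmf.expectation (Pi_pmf A False D) g"
proof -
  have 1: "measure_pmf.expectation (Pi_pmf A False D) \<gamma> = measure_pmf.expectation (Pi_pmf C False D) \<gamma>"
    using indep_split[OF A C B dC dep_const[of B 1], of D] by simp
  have 2: "measure_pmf.expectation (Pi_pmf A False D) g = measure_pmf.expectation (Pi_pmf (A - C) False D) g"
    using indep_split[OF A C B dep_const[of C 1] dB, of D] by simp
  show ?thesis using indep_split[OF assms, of D] 1 2 by simp
qed

lemma dep_mult: "dep B f \<Longrightarrow> dep C g \<Longrightarrow> dep (B \<union> C) (\<lambda>y. f y * g y)"
  unfolding dep_def by (metis UnI1 UnI2)

lemma dep_mono: "dep B f \<Longrightarrow> B \<subseteq> C \<Longrightarrow> dep C f"
  unfolding dep_def by blast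

lemma dep_comp: "dep B f \<Longrightarrow> dep B (\<lambda>y. h (f y))"
  unfolding dep_def by metis

lemma block_prod:
  fixes \<gamma> :: "('a \<Rightarrow> bool) \<Rightarrow> real" and g :: "'j \<Rightarrow> ('a \<Rightarrow> bool) \<Rightarrow> real"
  assumes A: "finite A" and J: "finite J"
    and BA: "\<And>j. j \<in> J \<Longrightarrow> B j \<subseteq> A"
    and disj: "\<And>i j. i \<in> J \<Longrightarrow> j \<in> J \<Longrightarrow> i \<noteq> j \<Longrightarrow> B i \<inter> B j = {}"
    and dg: "\<And>j. j \<in> J \<Longrightarrow> dep (B j) (g j)"
    and C: "C \<subseteq> A" and BC: "\<And>j. j \<in> J \<Longrightarrow> B j \<inter> C = {}"
    and dC: "dep C \<gamma>"
  shows "measure_pmf.expectation (Pi_pmf A False D) (\<lambda>y. \<gamma> y * (\<Prod>j\<in>J. g j y))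
       = measure_pmf.expectation (Pi_pmf A False D) \<gamma> *
         (\<Prod>j\<in>J. measure_pmf.expectation (Pi_pmf A False D) (g j))"
  using J BA disj dg C BC dC
proof (induction J arbitrary: \<gamma> C rule: finite_induct)
  case empty
  then show ?case by simp
next
  case (insert k J)
  have eq: "(\<lambda>y. \<gamma> y * (\<Prod>j\<in>insert k J. g j y)) = (\<lambda>y. (\<gamma> y * g k y) * (\<Prod>j\<in>J. g j y))"
    using insert.hyps by (auto simp: mult_ac)
  have "measure_pmf.expectation (Pi_pmf A False D) (\<lambda>y. (\<gamma> y * g k y) * (\<Prod>j\<in>J. g j y))
      = measure_pmf.expectation (Pi_pmf A False D) (\<lambda>y. \<gamma> y * g k y) *
         (\<Prod>j\<in>J. measure_pmf.expectation (Pi_pmf A False D) (g j))"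
  proof (rule insert.IH)
    show "C \<union> B k \<subseteq> A" using insert.prems by auto
    show "dep (C \<union> B k) (\<lambda>y. \<gamma> y * g k y)"
      using insert.prems by (intro dep_mult) auto
    fix j assume j: "j \<in> J"
    have "B j \<inter> B k = {}" using insert.prems(2)[of j k] insert.hyps j by auto
    thus "B j \<inter> (C \<union> B k) = {}" using insert.prems(5)[of j] j by auto
  qed (use insert.prems in auto)
  also have "measure_pmf.expectation (Pi_pmf A False D) (\<lambda>y. \<gamma> y * g k y)
     = measure_pmf.expectation (Pi_pmf A False D) \<gamma> * measure_pmf.expectation (Pi_pmf A False D) (g k)"
    using insert.prems by (intro indep2[OF A, of C "B k"]) auto
  finally show ?case using insert.hyps by (simp add: eq mult_ac)
qed

lemma E_blk:
  fixes h :: "('a \<Rightarrow> bool) \<Rightarrow> real"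
  assumes A: "finite A" and BA: "B \<subseteq> A" and d: "dep B h"
  shows "measure_pmf.expectation (Pi_pmf A False D) h = measure_pmf.expectation (Pi_pmf B False D) h"
  using indep_split[OF A BA _ d dep_const[of "{}" 1], of D] by simp

lemma expectation_pair:
  fixes F :: "'a \<times> 'b \<Rightarrow> real"
  assumes "finite (set_pmf M)" "finite (set_pmf N)"
  shows "measure_pmf.expectation (pair_pmf M N) F
       = measure_pmf.expectation M (\<lambda>a. measure_pmf.expectation N (\<lambda>b. F (a, b)))"
proof -
  have "measure_pmf.expectation (pair_pmf M N) F
      = (\<Sum>z\<in>set_pmf M \<times> set_pmf N. F z * pmf (pair_pmf M N) z)"
    using assms by (intro integral_measure_pmf_real) auto
  also have "\<dots> = (\<Sum>a\<in>set_pmf M. \<Sum>b\<in>set_pmf N. F (a,b) * (pmf M a * pmf N b))"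
    by (simp add: sum.cartesian_product case_prod_beta)
       (intro sum.cong refl, auto simp: pmf_pair)
  also have "\<dots> = (\<Sum>a\<in>set_pmf M. (\<Sum>b\<in>set_pmf N. F (a,b) * pmf N b) * pmf M a)"
    by (simp add: sum_distrib_right sum_distrib_left mult_ac)
  also have "\<dots> = measure_pmf.expectation M (\<lambda>a. measure_pmf.expectation N (\<lambda>b. F (a, b)))"
    using assms by (simp add: integral_measure_pmf_real)
  finally show ?thesis .
qed

lemma fin_bern: "finite (set_pmf (bernoulli_pmf p))"
  by (rule finite_subset[of _ UNIV]) auto

lemma E_Pi_insert:
  fixes h :: "('a \<Rightarrow> bool) \<Rightarrow> real"
  assumes B: "finite B" "x \<notin> B" and p: "0 \<le> p" "p \<le> 1"
  shows "measure_pmf.expectation (Pi_pmf (insert x B) False (\<lambda>_. bernoulli_pmf p)) h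
     = p * measure_pmf.expectation (Pi_pmf B False (\<lambda>_. bernoulli_pmf p)) (\<lambda>y. h (y(x:=True)))
     + (1 - p) * measure_pmf.expectation (Pi_pmf B False (\<lambda>_. bernoulli_pmf p)) (\<lambda>y. h (y(x:=False)))"
proof -
  have "measure_pmf.expectation (Pi_pmf (insert x B) False (\<lambda>_. bernoulli_pmf p)) h
     = measure_pmf.expectation (pair_pmf (bernoulli_pmf p) (Pi_pmf B False (\<lambda>_. bernoulli_pmf p)))
         (\<lambda>(b, f). h (f(x := b)))"
    using B by (simp add: Pi_pmf_insert case_prod_unfold)
  also have "\<dots> = measure_pmf.expectation (bernoulli_pmf p) (\<lambda>b. measure_pmf.expectation (Pi_pmf B False (\<lambda>_. bernoulli_pmf p)) (\<lambda>f. h (f(x := b))))"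
    using expectation_pair[of "bernoulli_pmf p" "Pi_pmf B False (\<lambda>_. bernoulli_pmf p)"
          "\<lambda>(b, f). h (f(x := b))"] B finite_set_Pi_bool[OF B(1)] fin_bern by simp
  finally show ?thesis using p by (simp add: mult_ac)
qed

lemma E_Pi_empty: fixes h :: "('a \<Rightarrow> bool) \<Rightarrow> real" shows "measure_pmf.expectation (Pi_pmf {} False D) h = h (\<lambda>_. False)"
  by simp

lemma prod_of_bool_real: "finite R \<Longrightarrow> (\<Prod>w\<in>R. of_bool (P w) :: real) = of_bool (\<forall>w\<in>R. P w)"
  by (induction R rule: finite_induct) auto

lemma cnt0: "finite R \<Longrightarrow> (of_bool (card {w\<in>R. \<alpha> w} = 0) :: real) = (\<Prod>w\<in>R. of_bool (\<not> \<alpha> w))"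
  by (auto simp: prod_of_bool_real)

lemma cnt1:
  assumes R: "finite R"
  shows "(of_bool (card {w\<in>R. \<alpha> w} = 1) :: real)
       = (\<Sum>w1\<in>R. \<Prod>w\<in>R. of_bool (if w = w1 then \<alpha> w else \<not> \<alpha> w))"
proof -
  have "(\<Sum>w1\<in>R. \<Prod>w\<in>R. (of_bool (if w = w1 then \<alpha> w else \<not> \<alpha> w) :: real))
      = (\<Sum>w1\<in>R. of_bool ({w\<in>R. \<alpha> w} = {w1}))"
    using R by (intro sum.cong refl) (auto simp: prod_of_bool_real)
  also have "\<dots> = of_bool (card {w\<in>R. \<alpha> w} = 1)"
  proof (cases "card {w\<in>R. \<alpha> w} = 1")
    case True
    then obtain w0 where w0: "{w\<in>R. \<alpha> w} = {w0}" by (auto simp: card_1_singleton_iff)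
    hence "w0 \<in> R" by auto
    have "(\<Sum>w1\<in>R. (of_bool ({w\<in>R. \<alpha> w} = {w1}) :: real)) = (\<Sum>w1\<in>R. of_bool (w1 = w0))"
      using w0 by (intro sum.cong refl) auto
    also have "\<dots> = 1" using R \<open>w0 \<in> R\<close> by (simp add: sum.delta')
    finally show ?thesis using True by simp
  next
    case False
    hence "\<And>w1. {w\<in>R. \<alpha> w} \<noteq> {w1}" by force
    thus ?thesis using False by simp
  qed
  finally show ?thesis ..
qed

lemma prod_if1:
  assumes "finite R" "w1 \<in> R"
  shows "(\<Prod>w\<in>R. if w = w1 then a else b) = (a::real) * b ^ (card R - 1)"
proof -
  have "(\<Prod>w\<in>R. if w = w1 then a else b) = a * (\<Prod>w\<in>R - {w1}. if w = w1 then a else b)"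
    using assms by (simp add: prod.remove)
  also have "(\<Prod>w\<in>R - {w1}. if w = w1 then a else b) = (\<Prod>w\<in>R - {w1}. b)"
    by (intro prod.cong) auto
  finally show ?thesis using assms by simp
qed

lemma prod_if2:
  assumes "finite R" "w1 \<in> R" "w2 \<in> R" "w1 \<noteq> w2"
  shows "(\<Prod>w\<in>R. if w = w1 then a else if w = w2 then c else b) = (a::real) * c * b ^ (card R - 2)"
proof -
  have "(\<Prod>w\<in>R. if w = w1 then a else if w = w2 then c else b)
      = a * (\<Prod>w\<in>R - {w1}. if w = w1 then a else if w = w2 then c else b)"
    using assms by (simp add: prod.remove)
  also have "(\<Prod>w\<in>R - {w1}. if w = w1 then a else if w = w2 then c else b)
      = (\<Prod>w\<in>R - {w1}. if w = w2 then c else b)"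
    by (intro prod.cong) auto
  also have "\<dots> = c * b ^ (card (R - {w1}) - 1)"
    using assms by (intro prod_if1) auto
  finally show ?thesis using assms by (simp add: diff_diff_add numeral_2_eq_2)
qed

lemma sum_if11:
  assumes R: "finite R"
  shows "(\<Sum>w1\<in>R. \<Sum>w2\<in>R. \<Prod>w\<in>R. if w = w1 then (if w = w2 then s11 else s10)
            else (if w = w2 then s01 else s00))
       = real (card R) * ((s11::real) * s00 ^ (card R - 1)
           + real (card R - 1) * s10 * s01 * s00 ^ (card R - 2))"
proof -
  have "(\<Sum>w2\<in>R. \<Prod>w\<in>R. if w = w1 then (if w = w2 then s11 else s10)
            else (if w = w2 then s01 else s00))
      = s11 * s00 ^ (card R - 1) + real (card R - 1) * s10 * s01 * s00 ^ (card R - 2)"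
    if w1: "w1 \<in> R" for w1
  proof -
    have "(\<Sum>w2\<in>R. \<Prod>w\<in>R. if w = w1 then (if w = w2 then s11 else s10)
            else (if w = w2 then s01 else s00))
        = (\<Prod>w\<in>R. if w = w1 then (if w = w1 then s11 else s10)
            else (if w = w1 then s01 else s00)) +
          (\<Sum>w2\<in>R - {w1}. \<Prod>w\<in>R. if w = w1 then (if w = w2 then s11 else s10)
            else (if w = w2 then s01 else s00))"
      using R w1 by (simp add: sum.remove)
    also have "(\<Prod>w\<in>R. if w = w1 then (if w = w1 then s11 else s10)
            else (if w = w1 then s01 else s00)) = (\<Prod>w\<in>R. if w = w1 then s11 else s00)"
      by (intro prod.cong) auto
    also have "\<dots> = s11 * s00 ^ (card R - 1)" using R w1 by (rule prod_if1)
    also have "(\<Sum>w2\<in>R - {w1}. \<Prod>w\<in>R. if w = w1 then (if w = w2 then s11 else s10)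
            else (if w = w2 then s01 else s00))
        = (\<Sum>w2\<in>R - {w1}. s10 * s01 * s00 ^ (card R - 2))"
    proof (intro sum.cong refl)
      fix w2 assume w2: "w2 \<in> R - {w1}"
      have "(\<Prod>w\<in>R. if w = w1 then (if w = w2 then s11 else s10)
            else (if w = w2 then s01 else s00))
          = (\<Prod>w\<in>R. if w = w1 then s10 else if w = w2 then s01 else s00)"
        using w2 by (intro prod.cong) auto
      also have "\<dots> = s10 * s01 * s00 ^ (card R - 2)"
        using R w1 w2 by (intro prod_if2) auto
      finally show "(\<Prod>w\<in>R. if w = w1 then (if w = w2 then s11 else s10)
            else (if w = w2 then s01 else s00)) = s10 * s01 * s00 ^ (card R - 2)" .
    qed
    also have "\<dots> = real (card R - 1) * s10 * s01 * s00 ^ (card R - 2)"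
      using R w1 by (simp add: card_Diff_singleton mult_ac)
    finally show ?thesis .
  qed
  hence "(\<Sum>w1\<in>R. \<Sum>w2\<in>R. \<Prod>w\<in>R. if w = w1 then (if w = w2 then s11 else s10)
            else (if w = w2 then s01 else s00))
      = (\<Sum>w1\<in>R. s11 * s00 ^ (card R - 1) + real (card R - 1) * s10 * s01 * s00 ^ (card R - 2))"
    by (intro sum.cong) auto
  thus ?thesis by simp
qed

lemma sum_if10:
  assumes R: "finite R"
  shows "(\<Sum>w1\<in>R. \<Prod>w\<in>R. if w = w1 then s10 else s00) = real (card R) * ((s10::real) * s00 ^ (card R - 1))"
proof -
  have "(\<Sum>w1\<in>R. \<Prod>w\<in>R. if w = w1 then s10 else s00) = (\<Sum>w1\<in>R. s10 * s00 ^ (card R - 1))"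
    using R by (intro sum.cong refl prod_if1)
  thus ?thesis by simp
qed

lemma int_Pi: "finite A \<Longrightarrow> integrable (measure_pmf (Pi_pmf A (False::bool) D)) (f :: _ \<Rightarrow> real)"
  by (intro integrable_measure_pmf_finite finite_set_Pi_bool)

lemma E_two_sums:
  fixes \<gamma> :: "('a\<Rightarrow>bool) \<Rightarrow> real" and \<phi> :: "'u \<Rightarrow> 'w \<Rightarrow> ('a\<Rightarrow>bool) \<Rightarrow> real"
    and \<psi> :: "'v \<Rightarrow> 'w \<Rightarrow> ('a\<Rightarrow>bool) \<Rightarrow> real"
  assumes A: "finite A" and R: "finite R" and U: "finite U" and U': "finite U'"
    and BA: "\<And>w. w\<in>R \<Longrightarrow> B w \<subseteq> A"
    and disj: "\<And>w w'. w\<in>R \<Longrightarrow> w'\<in>R \<Longrightarrow> w\<noteq>w' \<Longrightarrow> B w \<inter> B w' = {}"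
    and C: "C \<subseteq> A" and BC: "\<And>w. w\<in>R \<Longrightarrow> B w \<inter> C = {}" and dC: "dep C \<gamma>"
    and d\<phi>: "\<And>a w. a\<in>U \<Longrightarrow> w\<in>R \<Longrightarrow> dep (B w) (\<phi> a w)"
    and d\<psi>: "\<And>b w. b\<in>U' \<Longrightarrow> w\<in>R \<Longrightarrow> dep (B w) (\<psi> b w)"
  shows "measure_pmf.expectation (Pi_pmf A False D)
           (\<lambda>y. \<gamma> y * (\<Sum>a\<in>U. \<Prod>w\<in>R. \<phi> a w y) * (\<Sum>b\<in>U'. \<Prod>w\<in>R. \<psi> b w y))
      = measure_pmf.expectation (Pi_pmf A False D) \<gamma> *
        (\<Sum>a\<in>U. \<Sum>b\<in>U'. \<Prod>w\<in>R. measure_pmf.expectation (Pi_pmf A False D) (\<lambda>y. \<phi> a w y * \<psi> b w y))"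
proof -
  let ?M = "Pi_pmf A False D"
  have eq: "(\<lambda>y. \<gamma> y * (\<Sum>a\<in>U. \<Prod>w\<in>R. \<phi> a w y) * (\<Sum>b\<in>U'. \<Prod>w\<in>R. \<psi> b w y))
     = (\<lambda>y. \<Sum>a\<in>U. \<Sum>b\<in>U'. \<gamma> y * (\<Prod>w\<in>R. \<phi> a w y * \<psi> b w y))"
    by (simp add: sum_distrib_left sum_distrib_right prod.distrib mult_ac)
  have "measure_pmf.expectation ?M (\<lambda>y. \<Sum>a\<in>U. \<Sum>b\<in>U'. \<gamma> y * (\<Prod>w\<in>R. \<phi> a w y * \<psi> b w y))
      = (\<Sum>a\<in>U. \<Sum>b\<in>U'. measure_pmf.expectation ?M (\<lambda>y. \<gamma> y * (\<Prod>w\<in>R. \<phi> a w y * \<psi> b w y)))"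
    using A by (simp add: Bochner_Integration.integral_sum int_Pi)
  also have "\<dots> = (\<Sum>a\<in>U. \<Sum>b\<in>U'. measure_pmf.expectation ?M \<gamma> *
        (\<Prod>w\<in>R. measure_pmf.expectation ?M (\<lambda>y. \<phi> a w y * \<psi> b w y)))"
  proof (intro sum.cong refl)
    fix a b assume ab: "a \<in> U" "b \<in> U'"
    show "measure_pmf.expectation ?M (\<lambda>y. \<gamma> y * (\<Prod>w\<in>R. \<phi> a w y * \<psi> b w y))
       = measure_pmf.expectation ?M \<gamma> * (\<Prod>w\<in>R. measure_pmf.expectation ?M (\<lambda>y. \<phi> a w y * \<psi> b w y))"
    proof (rule block_prod[OF A R BA disj _ C BC dC])
      fix w assume "w \<in> R"
      thus "dep (B w) (\<lambda>y. \<phi> a w y * \<psi> b w y)"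
        using dep_mult[OF d\<phi>[OF ab(1) \<open>w \<in> R\<close>] d\<psi>[OF ab(2) \<open>w \<in> R\<close>]] by simp
    qed
  qed
  finally have X: "measure_pmf.expectation ?M (\<lambda>y. \<Sum>a\<in>U. \<Sum>b\<in>U'. \<gamma> y * (\<Prod>w\<in>R. \<phi> a w y * \<psi> b w y))
      = (\<Sum>a\<in>U. \<Sum>b\<in>U'. measure_pmf.expectation ?M \<gamma> *
        (\<Prod>w\<in>R. measure_pmf.expectation ?M (\<lambda>y. \<phi> a w y * \<psi> b w y)))" .
  show ?thesis unfolding eq using X by (simp only: sum_distrib_left)
qed

lemma dep_if: "dep B P \<Longrightarrow> dep B (\<lambda>y. (of_bool (if c then P y else \<not> P y) :: real))"
  using dep_comp[of B P "\<lambda>t. (of_bool (if c then t else \<not> t) :: real)"] by simp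

lemma dep_not: "dep B P \<Longrightarrow> dep B (\<lambda>y. (of_bool (\<not> P y) :: real))"
  using dep_comp[of B P "\<lambda>t. (of_bool (\<not> t) :: real)"] by simp

lemma witness:
  fixes \<gamma> :: "('a\<Rightarrow>bool) \<Rightarrow> real" and \<alpha> \<beta> :: "'w \<Rightarrow> ('a\<Rightarrow>bool) \<Rightarrow> bool"
  assumes A: "finite A" and R: "finite R"
    and BA: "\<And>w. w\<in>R \<Longrightarrow> B w \<subseteq> A"
    and disj: "\<And>w w'. w\<in>R \<Longrightarrow> w'\<in>R \<Longrightarrow> w\<noteq>w' \<Longrightarrow> B w \<inter> B w' = {}"
    and C: "C \<subseteq> A" and BC: "\<And>w. w\<in>R \<Longrightarrow> B w \<inter> C = {}" and dC: "dep C \<gamma>"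
    and d\<alpha>: "\<And>w. w\<in>R \<Longrightarrow> dep (B w) (\<alpha> w)"
    and d\<beta>: "\<And>w. w\<in>R \<Longrightarrow> dep (B w) (\<beta> w)"
    and s11: "\<And>w. w\<in>R \<Longrightarrow> measure_pmf.expectation (Pi_pmf A False D) (\<lambda>y. of_bool (\<alpha> w y \<and> \<beta> w y)) = s11"
    and s10: "\<And>w. w\<in>R \<Longrightarrow> measure_pmf.expectation (Pi_pmf A False D) (\<lambda>y. of_bool (\<alpha> w y \<and> \<not> \<beta> w y)) = s10"
    and s01: "\<And>w. w\<in>R \<Longrightarrow> measure_pmf.expectation (Pi_pmf A False D) (\<lambda>y. of_bool (\<not> \<alpha> w y \<and> \<beta> w y)) = s01"
    and s00: "\<And>w. w\<in>R \<Longrightarrow> measure_pmf.expectation (Pi_pmf A False D) (\<lambda>y. of_bool (\<not> \<alpha> w y \<and> \<not> \<beta> w y)) = s00"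
  shows witness11: "measure_pmf.expectation (Pi_pmf A False D)
      (\<lambda>y. \<gamma> y * of_bool (card {w\<in>R. \<alpha> w y} = 1) * of_bool (card {w\<in>R. \<beta> w y} = 1))
     = measure_pmf.expectation (Pi_pmf A False D) \<gamma> *
       (real (card R) * (s11 * s00 ^ (card R - 1) + real (card R - 1) * s10 * s01 * s00 ^ (card R - 2)))"
   and witness10: "measure_pmf.expectation (Pi_pmf A False D)
      (\<lambda>y. \<gamma> y * of_bool (card {w\<in>R. \<alpha> w y} = 1) * of_bool (card {w\<in>R. \<beta> w y} = 0))
     = measure_pmf.expectation (Pi_pmf A False D) \<gamma> * (real (card R) * (s10 * s00 ^ (card R - 1)))"
   and witness01: "measure_pmf.expectation (Pi_pmf A False D)
      (\<lambda>y. \<gamma> y * of_bool (card {w\<in>R. \<alpha> w y} = 0) * of_bool (card {w\<in>R. \<beta> w y} = 1))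
     = measure_pmf.expectation (Pi_pmf A False D) \<gamma> * (real (card R) * (s01 * s00 ^ (card R - 1)))"
   and witness00: "measure_pmf.expectation (Pi_pmf A False D)
      (\<lambda>y. \<gamma> y * of_bool (card {w\<in>R. \<alpha> w y} = 0) * of_bool (card {w\<in>R. \<beta> w y} = 0))
     = measure_pmf.expectation (Pi_pmf A False D) \<gamma> * s00 ^ card R"
proof -
  let ?M = "Pi_pmf A False D"
  let ?E = "measure_pmf.expectation ?M"
  define f1a where "f1a = (\<lambda>w1 w y. (of_bool (if w = w1 then \<alpha> w y else \<not> \<alpha> w y) :: real))"
  define f1b where "f1b = (\<lambda>w1 w y. (of_bool (if w = w1 then \<beta> w y else \<not> \<beta> w y) :: real))"
  define f0a where "f0a = (\<lambda>u::nat. \<lambda>w y. (of_bool (\<not> \<alpha> w y) :: real))"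
  define f0b where "f0b = (\<lambda>u::nat. \<lambda>w y. (of_bool (\<not> \<beta> w y) :: real))"
  have c1a: "\<And>y. (of_bool (card {w\<in>R. \<alpha> w y} = 1) :: real) = (\<Sum>w1\<in>R. \<Prod>w\<in>R. f1a w1 w y)"
    unfolding f1a_def using cnt1[OF R] by simp
  have c1b: "\<And>y. (of_bool (card {w\<in>R. \<beta> w y} = 1) :: real) = (\<Sum>w1\<in>R. \<Prod>w\<in>R. f1b w1 w y)"
    unfolding f1b_def using cnt1[OF R] by simp
  have c0a: "\<And>y. (of_bool (card {w\<in>R. \<alpha> w y} = 0) :: real) = (\<Sum>u\<in>{0::nat}. \<Prod>w\<in>R. f0a u w y)"
    unfolding f0a_def using cnt0[OF R] by simp
  have c0b: "\<And>y. (of_bool (card {w\<in>R. \<beta> w y} = 0) :: real) = (\<Sum>u\<in>{0::nat}. \<Prod>w\<in>R. f0b u w y)"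
    unfolding f0b_def using cnt0[OF R] by simp
  have d1a: "\<And>a w. a \<in> R \<Longrightarrow> w \<in> R \<Longrightarrow> dep (B w) (f1a a w)"
    unfolding f1a_def using d\<alpha> by (intro dep_if) auto
  have d1b: "\<And>a w. a \<in> R \<Longrightarrow> w \<in> R \<Longrightarrow> dep (B w) (f1b a w)"
    unfolding f1b_def using d\<beta> by (intro dep_if) auto
  have d0a: "\<And>a w. a \<in> {0} \<Longrightarrow> w \<in> R \<Longrightarrow> dep (B w) (f0a a w)"
    unfolding f0a_def using d\<alpha> by (intro dep_not) auto
  have d0b: "\<And>a w. a \<in> {0} \<Longrightarrow> w \<in> R \<Longrightarrow> dep (B w) (f0b a w)"
    unfolding f0b_def using d\<beta> by (intro dep_not) auto
  note ts = E_two_sums[OF A R _ _ BA disj C BC dC]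
  have of_and: "\<And>P Q. (of_bool P :: real) * of_bool Q = of_bool (P \<and> Q)" by simp
  have e11: "?E (\<lambda>y. f1a w1 w y * f1b w2 w y) =
     (if w = w1 then (if w = w2 then s11 else s10) else (if w = w2 then s01 else s00))"
    if "w \<in> R" for w w1 w2
    using that s11 s10 s01 s00 unfolding f1a_def f1b_def of_and by (auto)
  have "?E (\<lambda>y. \<gamma> y * of_bool (card {w\<in>R. \<alpha> w y} = 1) * of_bool (card {w\<in>R. \<beta> w y} = 1))
      = ?E \<gamma> * (\<Sum>a\<in>R. \<Sum>b\<in>R. \<Prod>w\<in>R. ?E (\<lambda>y. f1a a w y * f1b b w y))"
    unfolding c1a c1b using R d1a d1b by (intro ts) auto
  also have "(\<Sum>a\<in>R. \<Sum>b\<in>R. \<Prod>w\<in>R. ?E (\<lambda>y. f1a a w y * f1b b w y))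
     = (\<Sum>a\<in>R. \<Sum>b\<in>R. \<Prod>w\<in>R. (if w = a then (if w = b then s11 else s10) else (if w = b then s01 else s00)))"
    using e11 by (intro sum.cong prod.cong refl) auto
  also have "\<dots> = real (card R) * (s11 * s00 ^ (card R - 1) + real (card R - 1) * s10 * s01 * s00 ^ (card R - 2))"
    using R by (rule sum_if11)
  finally show "?E (\<lambda>y. \<gamma> y * of_bool (card {w\<in>R. \<alpha> w y} = 1) * of_bool (card {w\<in>R. \<beta> w y} = 1))
     = ?E \<gamma> * (real (card R) * (s11 * s00 ^ (card R - 1) + real (card R - 1) * s10 * s01 * s00 ^ (card R - 2)))" .
  have e10: "?E (\<lambda>y. f1a w1 w y * f0b u w y) = (if w = w1 then s10 else s00)"
    if "w \<in> R" for w w1 u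
    using that s10 s00 unfolding f1a_def f0b_def of_and by (auto)
  have "?E (\<lambda>y. \<gamma> y * of_bool (card {w\<in>R. \<alpha> w y} = 1) * of_bool (card {w\<in>R. \<beta> w y} = 0))
      = ?E \<gamma> * (\<Sum>a\<in>R. \<Sum>b\<in>{0}. \<Prod>w\<in>R. ?E (\<lambda>y. f1a a w y * f0b b w y))"
    unfolding c1a c0b using R d1a d0b by (intro ts) auto
  also have "(\<Sum>a\<in>R. \<Sum>b\<in>{0}. \<Prod>w\<in>R. ?E (\<lambda>y. f1a a w y * f0b b w y))
     = (\<Sum>a\<in>R. \<Prod>w\<in>R. (if w = a then s10 else s00))"
    using e10 by (auto intro!: sum.cong prod.cong)
  also have "\<dots> = real (card R) * (s10 * s00 ^ (card R - 1))"
    using R by (rule sum_if10)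
  finally show "?E (\<lambda>y. \<gamma> y * of_bool (card {w\<in>R. \<alpha> w y} = 1) * of_bool (card {w\<in>R. \<beta> w y} = 0))
     = ?E \<gamma> * (real (card R) * (s10 * s00 ^ (card R - 1)))" .
  have e01: "?E (\<lambda>y. f0a u w y * f1b w1 w y) = (if w = w1 then s01 else s00)"
    if "w \<in> R" for w w1 u
    using that s01 s00 unfolding f1b_def f0a_def of_and by (auto)
  have "?E (\<lambda>y. \<gamma> y * of_bool (card {w\<in>R. \<alpha> w y} = 0) * of_bool (card {w\<in>R. \<beta> w y} = 1))
      = ?E \<gamma> * (\<Sum>a\<in>{0}. \<Sum>b\<in>R. \<Prod>w\<in>R. ?E (\<lambda>y. f0a a w y * f1b b w y))"
    unfolding c0a c1b using R d0a d1b by (intro ts) auto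
  also have "(\<Sum>a\<in>{0}. \<Sum>b\<in>R. \<Prod>w\<in>R. ?E (\<lambda>y. f0a a w y * f1b b w y))
     = (\<Sum>a\<in>R. \<Prod>w\<in>R. (if w = a then s01 else s00))"
    using e01 by (auto intro!: sum.cong prod.cong)
  also have "\<dots> = real (card R) * (s01 * s00 ^ (card R - 1))"
    using R by (rule sum_if10)
  finally show "?E (\<lambda>y. \<gamma> y * of_bool (card {w\<in>R. \<alpha> w y} = 0) * of_bool (card {w\<in>R. \<beta> w y} = 1))
     = ?E \<gamma> * (real (card R) * (s01 * s00 ^ (card R - 1)))" .
  have e00: "?E (\<lambda>y. f0a u w y * f0b u' w y) = s00"
    if "w \<in> R" for w u u'
    using that s00 unfolding f0a_def f0b_def of_and by (auto)
  have "?E (\<lambda>y. \<gamma> y * of_bool (card {w\<in>R. \<alpha> w y} = 0) * of_bool (card {w\<in>R. \<beta> w y} = 0))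
      = ?E \<gamma> * (\<Sum>a\<in>{0}. \<Sum>b\<in>{0}. \<Prod>w\<in>R. ?E (\<lambda>y. f0a a w y * f0b b w y))"
    unfolding c0a c0b using R d0a d0b by (intro ts) auto
  also have "(\<Sum>a\<in>{0}. \<Sum>b\<in>{0}. \<Prod>w\<in>R. ?E (\<lambda>y. f0a a w y * f0b b w y)) = (\<Prod>w\<in>R. s00)"
    using e00 by (auto intro!: prod.cong)
  finally show "?E (\<lambda>y. \<gamma> y * of_bool (card {w\<in>R. \<alpha> w y} = 0) * of_bool (card {w\<in>R. \<beta> w y} = 0))
     = ?E \<gamma> * s00 ^ card R" by simp
qed

lemma finite_vpairs: "finite (vpairs n)"
  unfolding vpairs_def by (rule finite_subset[of _ "Pow {1..n}"]) auto

lemma card_vpairs: "card (vpairs n) = n choose 2"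
  unfolding vpairs_def using n_subsets[of "{1..n}" 2] by simp

lemma pair_in: "u \<noteq> v \<Longrightarrow> u \<in> {1..n} \<Longrightarrow> v \<in> {1..n} \<Longrightarrow> {u,v} \<in> vpairs n"
  unfolding vpairs_def by auto

lemma vpairsE:
  assumes "e \<in> vpairs n"
  obtains u v where "e = {u,v}" "u \<noteq> v" "u \<in> {1..n}" "v \<in> {1..n}"
  using assms unfolding vpairs_def by (auto simp: card_2_iff)

definition Om :: "nat \<Rightarrow> real \<Rightarrow> (nat set \<Rightarrow> bool) pmf" where
  "Om n p = Pi_pmf (vpairs n) False (\<lambda>_. bernoulli_pmf p)"

definition Xf :: "nat \<Rightarrow> nat set \<Rightarrow> (nat set \<Rightarrow> bool) \<Rightarrow> real" where
  "Xf n e y = of_bool (\<not> y e \<and> card {w\<in>{1..n}. w \<notin> e \<and> (\<forall>a\<in>e. y {a,w})} = 1)"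

lemma E_blk2:
  assumes "finite A" "{a,b} \<subseteq> A" "a \<noteq> b" "0 \<le> p" "p \<le> 1" "dep {a,b} h"
  shows "measure_pmf.expectation (Pi_pmf A False (\<lambda>_. bernoulli_pmf p)) h =
    p * (p * h ((\<lambda>_. False)(b := True, a := True)) + (1 - p) * h ((\<lambda>_. False)(b := False, a := True)))
  + (1 - p) * (p * h ((\<lambda>_. False)(b := True, a := False)) + (1 - p) * h ((\<lambda>_. False)(b := False, a := False)))"
  using assms by (simp add: E_blk[OF assms(1,2,6)] E_Pi_insert)

lemma dep_I: "(\<And>y y'. (\<And>x. x \<in> B \<Longrightarrow> y x = y' x) \<Longrightarrow> f y = f y') \<Longrightarrow> dep B f"
  unfolding dep_def by blast

lemma E_same:
  assumes uv: "u \<noteq> v" "u \<in> {1..n}" "v \<in> {1..n}" and p: "0 \<le> p" "p \<le> 1"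
  shows "measure_pmf.expectation (Om n p) (Xf n {u,v}) = real (n-2) * ((1-p) * p^2 * (1-p^2)^(n-3))"
proof -
  define R where "R = {1..n} - {u,v}"
  have R: "finite R" unfolding R_def by auto
  have cR: "card R = n - 2" unfolding R_def using uv by (simp add: card_Diff_subset)
  define \<alpha> where "\<alpha> = (\<lambda>w (y::nat set \<Rightarrow> bool). y {u,w} \<and> y {v,w})"
  define B where "B = (\<lambda>w::nat. {{u,w},{v,w}})"
  define \<gamma> where "\<gamma> = (\<lambda>y::nat set \<Rightarrow> bool. (of_bool (\<not> y {u,v}) :: real))"
  have A: "finite (vpairs n)" by (rule finite_vpairs)
  have pt: "Xf n {u,v} y = \<gamma> y * of_bool (card {w\<in>R. \<alpha> w y} = 1) * of_bool (card {w\<in>R. \<alpha> w y} = 1)" for y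
  proof -
    have "{w\<in>{1..n}. w \<notin> {u,v} \<and> (\<forall>a\<in>{u,v}. y {a,w})} = {w\<in>R. \<alpha> w y}"
      unfolding R_def \<alpha>_def by auto
    thus ?thesis unfolding Xf_def \<gamma>_def by simp
  qed
  have BA: "B w \<subseteq> vpairs n" if "w \<in> R" for w
    using that uv unfolding B_def R_def by (auto intro!: pair_in)
  have disj: "B w \<inter> B w' = {}" if "w \<in> R" "w' \<in> R" "w \<noteq> w'" for w w'
    using that uv unfolding B_def R_def by (auto simp: doubleton_eq_iff)
  have C: "{{u,v}} \<subseteq> vpairs n" using uv by (auto intro!: pair_in)
  have BC: "B w \<inter> {{u,v}} = {}" if "w \<in> R" for w
    using that uv unfolding B_def R_def by (auto simp: doubleton_eq_iff)
  have dC: "dep {{u,v}} \<gamma>" unfolding \<gamma>_def by (rule dep_I) auto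
  have d\<alpha>: "dep (B w) (\<alpha> w)" for w unfolding \<alpha>_def B_def by (rule dep_I) auto
  have ne: "{u,w} \<noteq> {v,w}" if "w \<in> R" for w using that uv unfolding R_def by (auto simp: doubleton_eq_iff)
  have blk: "measure_pmf.expectation (Om n p) h =
    p * (p * h ((\<lambda>_. False)({v,w} := True, {u,w} := True)) + (1 - p) * h ((\<lambda>_. False)({v,w} := False, {u,w} := True)))
  + (1 - p) * (p * h ((\<lambda>_. False)({v,w} := True, {u,w} := False)) + (1 - p) * h ((\<lambda>_. False)({v,w} := False, {u,w} := False)))"
    if "w \<in> R" "dep (B w) h" for w h
    unfolding Om_def using E_blk2[OF A BA[OF that(1), unfolded B_def] ne[OF that(1)] p, of h] that(2)
    unfolding B_def by simp
  have s11: "measure_pmf.expectation (Om n p) (\<lambda>y. of_bool (\<alpha> w y \<and> \<alpha> w y)) = p^2" if "w \<in> R" for w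
    by (subst blk[OF that]) (use ne[OF that] in \<open>auto simp: \<alpha>_def B_def power2_eq_square intro!: dep_I\<close>)
  have s10: "measure_pmf.expectation (Om n p) (\<lambda>y. of_bool (\<alpha> w y \<and> \<not> \<alpha> w y)) = 0" for w
    by simp
  have s01: "measure_pmf.expectation (Om n p) (\<lambda>y. of_bool (\<not> \<alpha> w y \<and> \<alpha> w y)) = 0" for w
    by simp
  have s00: "measure_pmf.expectation (Om n p) (\<lambda>y. of_bool (\<not> \<alpha> w y \<and> \<not> \<alpha> w y)) = 1 - p^2" if "w \<in> R" for w
    by (subst blk[OF that]) (use ne[OF that] in \<open>auto simp: \<alpha>_def B_def power2_eq_square algebra_simps intro!: dep_I\<close>)
  have Eg: "measure_pmf.expectation (Om n p) \<gamma> = 1 - p"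
  proof -
    have "measure_pmf.expectation (Om n p) \<gamma> = measure_pmf.expectation (Pi_pmf {{u,v}} False (\<lambda>_. bernoulli_pmf p)) \<gamma>"
      unfolding Om_def by (rule E_blk[OF A C dC])
    also have "\<dots> = 1 - p" using p by (simp add: E_Pi_insert \<gamma>_def)
    finally show ?thesis .
  qed
  have "measure_pmf.expectation (Om n p) (Xf n {u,v}) =
     measure_pmf.expectation (Om n p) (\<lambda>y. \<gamma> y * of_bool (card {w\<in>R. \<alpha> w y} = 1) * of_bool (card {w\<in>R. \<alpha> w y} = 1))"
    by (rule arg_cong[where f="measure_pmf.expectation (Om n p)"], rule ext, rule pt)
  also have "\<dots> = measure_pmf.expectation (Om n p) \<gamma> *
       (real (card R) * (p^2 * (1-p^2) ^ (card R - 1) + real (card R - 1) * 0 * 0 * (1-p^2) ^ (card R - 2)))"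
    unfolding Om_def
    by (rule witness11[OF A R BA disj C BC dC d\<alpha> d\<alpha>])
       (use s11 s10 s01 s00 in \<open>simp_all add: Om_def\<close>)
  also have "\<dots> = real (n-2) * ((1-p) * p^2 * (1-p^2)^(n-3))"
    by (simp add: Eg cR)
  finally show ?thesis .
qed

definition ex1 :: "real \<Rightarrow> (bool \<Rightarrow> real) \<Rightarrow> real" where
  "ex1 p f = p * f True + (1 - p) * f False"

lemma E3g:
  assumes "finite A" "{a,b,c} \<subseteq> A" "a \<noteq> b" "a \<noteq> c" "b \<noteq> c" "0 \<le> p" "p \<le> 1"
  shows "measure_pmf.expectation (Pi_pmf A False (\<lambda>_. bernoulli_pmf p)) (\<lambda>y. of_bool (g (y a) (y b) (y c)))
    = ex1 p (\<lambda>A. ex1 p (\<lambda>B. ex1 p (\<lambda>C. of_bool (g A B C))))"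
proof -
  have d: "dep {a,b,c} (\<lambda>y. (of_bool (g (y a) (y b) (y c)) :: real))" by (rule dep_I) auto
  show ?thesis using assms by (simp add: E_blk[OF assms(1,2) d] E_Pi_insert ex1_def)
qed

lemma E4g:
  assumes "finite A" "{a,b,c,d} \<subseteq> A" "a \<noteq> b" "a \<noteq> c" "a \<noteq> d" "b \<noteq> c" "b \<noteq> d" "c \<noteq> d" "0 \<le> p" "p \<le> 1"
  shows "measure_pmf.expectation (Pi_pmf A False (\<lambda>_. bernoulli_pmf p)) (\<lambda>y. of_bool (g (y a) (y b) (y c) (y d)))
    = ex1 p (\<lambda>A. ex1 p (\<lambda>B. ex1 p (\<lambda>C. ex1 p (\<lambda>D. of_bool (g A B C D)))))"
proof -
  have d: "dep {a,b,c,d} (\<lambda>y. (of_bool (g (y a) (y b) (y c) (y d)) :: real))" by (rule dep_I) auto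
  show ?thesis using assms by (simp add: E_blk[OF assms(1,2) d] E_Pi_insert ex1_def)
qed

lemma "ex1 p (\<lambda>A. ex1 p (\<lambda>B. ex1 p (\<lambda>C. of_bool (\<not>(A \<and> B) \<and> \<not> (A \<and> C))))) = 1 - 2*p^2+p^3"
  by (simp add: ex1_def power2_eq_square power3_eq_cube algebra_simps)

lemma E_share:
  assumes uvx: "u \<noteq> v" "u \<noteq> x" "v \<noteq> x" "u \<in> {1..n}" "v \<in> {1..n}" "x \<in> {1..n}"
    and p: "0 \<le> p" "p \<le> 1"
  shows "measure_pmf.expectation (Om n p) (\<lambda>y. Xf n {u,v} y * Xf n {u,x} y) =
     (1-p)^2 * (real (n-3) * (p^3 * (1-2*p^2+p^3)^(n-4) + real (n-4) * (p^2*(1-p)) * (p^2*(1-p)) * (1-2*p^2+p^3)^(n-5)))"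
proof -
  define R where "R = {1..n} - {u,v,x}"
  have R: "finite R" unfolding R_def by auto
  have cR: "card R = n - 3" unfolding R_def using uvx by (simp add: card_Diff_subset)
  define \<alpha> where "\<alpha> = (\<lambda>w (y::nat set \<Rightarrow> bool). y {u,w} \<and> y {v,w})"
  define \<beta> where "\<beta> = (\<lambda>w (y::nat set \<Rightarrow> bool). y {u,w} \<and> y {x,w})"
  define B where "B = (\<lambda>w::nat. {{u,w},{v,w},{x,w}})"
  define \<gamma> where "\<gamma> = (\<lambda>y::nat set \<Rightarrow> bool. (of_bool (\<not> y {u,v} \<and> \<not> y {u,x}) :: real))"
  have A: "finite (vpairs n)" by (rule finite_vpairs)
  have pt: "Xf n {u,v} y * Xf n {u,x} y = \<gamma> y * of_bool (card {w\<in>R. \<alpha> w y} = 1) * of_bool (card {w\<in>R. \<beta> w y} = 1)" for y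
  proof (cases "\<not> y {u,v} \<and> \<not> y {u,x}")
    case True
    have "{w\<in>{1..n}. w \<notin> {u,v} \<and> (\<forall>a\<in>{u,v}. y {a,w})} = {w\<in>R. \<alpha> w y}"
      using True unfolding R_def \<alpha>_def by auto
    moreover have "{w\<in>{1..n}. w \<notin> {u,x} \<and> (\<forall>a\<in>{u,x}. y {a,w})} = {w\<in>R. \<beta> w y}"
      using True unfolding R_def \<beta>_def by (auto simp: insert_commute)
    ultimately show ?thesis unfolding Xf_def \<gamma>_def using True by simp
  next
    case False
    thus ?thesis unfolding Xf_def \<gamma>_def by auto
  qed
  have BA: "B w \<subseteq> vpairs n" if "w \<in> R" for w
    using that uvx unfolding B_def R_def by (auto intro!: pair_in)
  have disj: "B w \<inter> B w' = {}" if "w \<in> R" "w' \<in> R" "w \<noteq> w'" for w w'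
    using that uvx unfolding B_def R_def by (auto simp: doubleton_eq_iff)
  have C: "{{u,v},{u,x}} \<subseteq> vpairs n" using uvx by (auto intro!: pair_in)
  have BC: "B w \<inter> {{u,v},{u,x}} = {}" if "w \<in> R" for w
    using that uvx unfolding B_def R_def by (auto simp: doubleton_eq_iff)
  have dC: "dep {{u,v},{u,x}} \<gamma>" unfolding \<gamma>_def by (rule dep_I) auto
  have d\<alpha>: "dep (B w) (\<alpha> w)" for w unfolding \<alpha>_def B_def by (rule dep_I) auto
  have d\<beta>: "dep (B w) (\<beta> w)" for w unfolding \<beta>_def B_def by (rule dep_I) auto
  have ne: "{u,w} \<noteq> {v,w}" "{u,w} \<noteq> {x,w}" "{v,w} \<noteq> {x,w}" if "w \<in> R" for w
    using that uvx unfolding R_def by (auto simp: doubleton_eq_iff)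
  have s11: "measure_pmf.expectation (Om n p) (\<lambda>y. of_bool (\<alpha> w y \<and> \<beta> w y)) = p^3" if "w \<in> R" for w
    using E3g[OF A BA[OF that, unfolded B_def] ne[OF that] p, of "\<lambda>A B C. (A \<and> B) \<and> (A \<and> C)"]
    by (simp add: Om_def \<alpha>_def \<beta>_def ex1_def power3_eq_cube)
  have s10: "measure_pmf.expectation (Om n p) (\<lambda>y. of_bool (\<alpha> w y \<and> \<not> \<beta> w y)) = p^2*(1-p)" if "w \<in> R" for w
    using E3g[OF A BA[OF that, unfolded B_def] ne[OF that] p, of "\<lambda>A B C. (A \<and> B) \<and> \<not>(A \<and> C)"]
    by (simp add: Om_def \<alpha>_def \<beta>_def ex1_def power2_eq_square)
  have s01: "measure_pmf.expectation (Om n p) (\<lambda>y. of_bool (\<not> \<alpha> w y \<and> \<beta> w y)) = p^2*(1-p)" if "w \<in> R" for w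
    using E3g[OF A BA[OF that, unfolded B_def] ne[OF that] p, of "\<lambda>A B C. \<not>(A \<and> B) \<and> (A \<and> C)"]
    by (simp add: Om_def \<alpha>_def \<beta>_def ex1_def power2_eq_square)
  have s00: "measure_pmf.expectation (Om n p) (\<lambda>y. of_bool (\<not> \<alpha> w y \<and> \<not> \<beta> w y)) = 1-2*p^2+p^3" if "w \<in> R" for w
    using E3g[OF A BA[OF that, unfolded B_def] ne[OF that] p, of "\<lambda>A B C. \<not>(A \<and> B) \<and> \<not>(A \<and> C)"]
    by (simp add: Om_def \<alpha>_def \<beta>_def ex1_def power2_eq_square power3_eq_cube algebra_simps)
  have ne2: "{u,v} \<noteq> {u,x}" using uvx by (auto simp: doubleton_eq_iff)
  have Eg: "measure_pmf.expectation (Om n p) \<gamma> = (1 - p)^2"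
  proof -
    have "measure_pmf.expectation (Om n p) \<gamma> = measure_pmf.expectation (Pi_pmf {{u,v},{u,x}} False (\<lambda>_. bernoulli_pmf p)) \<gamma>"
      unfolding Om_def by (rule E_blk[OF A C dC])
    also have "\<dots> = (1 - p)^2" using p ne2 by (simp add: E_Pi_insert \<gamma>_def power2_eq_square)
    finally show ?thesis .
  qed
  have "measure_pmf.expectation (Om n p) (\<lambda>y. Xf n {u,v} y * Xf n {u,x} y) =
     measure_pmf.expectation (Om n p) (\<lambda>y. \<gamma> y * of_bool (card {w\<in>R. \<alpha> w y} = 1) * of_bool (card {w\<in>R. \<beta> w y} = 1))"
    by (rule arg_cong[where f="measure_pmf.expectation (Om n p)"], rule ext, rule pt)
  also have "\<dots> = measure_pmf.expectation (Om n p) \<gamma> *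
       (real (card R) * (p^3 * (1-2*p^2+p^3) ^ (card R - 1) + real (card R - 1) * (p^2*(1-p)) * (p^2*(1-p)) * (1-2*p^2+p^3) ^ (card R - 2)))"
    unfolding Om_def
    by (rule witness11[OF A R BA disj C BC dC d\<alpha> d\<beta>])
       (use s11 s10 s01 s00 in \<open>simp_all add: Om_def\<close>)
  also have "\<dots> = (1-p)^2 * (real (n-3) * (p^3 * (1-2*p^2+p^3)^(n-4) + real (n-4) * (p^2*(1-p)) * (p^2*(1-p)) * (1-2*p^2+p^3)^(n-5)))"
    by (simp add: Eg cR numeral_eq_Suc)
  finally show ?thesis .
qed


lemma card_two:
  assumes "x \<noteq> z" shows "card {t\<in>{x,z}. P t} = of_bool (P x) + of_bool (P z)"
proof -
  have "{t\<in>{x,z}. P t} = (if P x then {x} else {}) \<union> (if P z then {z} else {})" by auto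
  thus ?thesis using assms by (cases "P x"; cases "P z") auto
qed

lemma of_bool_sum1: "(of_bool (k + c = (1::nat)) :: real) = of_bool (c = 0) * of_bool (k = 1) + of_bool (c = 1) * of_bool (k = 0)"
  by (cases c; cases k) auto

lemma E_disj:
  assumes d: "u \<noteq> v" "u \<noteq> x" "u \<noteq> z" "v \<noteq> x" "v \<noteq> z" "x \<noteq> z"
     and inn: "u \<in> {1..n}" "v \<in> {1..n}" "x \<in> {1..n}" "z \<in> {1..n}"
    and p: "0 \<le> p" "p \<le> 1"
  shows "measure_pmf.expectation (Om n p) (\<lambda>y. Xf n {u,v} y * Xf n {x,z} y) =
     (1-p)^2 * (((1-p)^4 + 4*p*(1-p)^3 + 2*p^2*(1-p)^2) *
          (real (n-4) * (p^4 * ((1-p^2)^2) ^ (n-5) + real (n-5) * (p^2*(1-p^2)) * (p^2*(1-p^2)) * ((1-p^2)^2) ^ (n-6)))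
       + 2*p^2*(1-p)^2 * (real (n-4) * (p^2*(1-p^2) * ((1-p^2)^2) ^ (n-5)))
       + 2*p^2*(1-p)^2 * (real (n-4) * (p^2*(1-p^2) * ((1-p^2)^2) ^ (n-5)))
       + 4*p^3*(1-p) * ((1-p^2)^2) ^ (n-4))"
proof -
  define R where "R = {1..n} - {u,v,x,z}"
  have R: "finite R" unfolding R_def by auto
  have cR: "card R = n - 4" unfolding R_def using d inn by (simp add: card_Diff_subset)
  define \<alpha> where "\<alpha> = (\<lambda>w (y::nat set \<Rightarrow> bool). y {u,w} \<and> y {v,w})"
  define \<beta> where "\<beta> = (\<lambda>w (y::nat set \<Rightarrow> bool). y {x,w} \<and> y {z,w})"
  define B where "B = (\<lambda>w::nat. {{u,w},{v,w},{x,w},{z,w}})"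
  define ca where "ca = (\<lambda>y::nat set \<Rightarrow> bool. (of_bool (y {u,x} \<and> y {v,x}) + of_bool (y {u,z} \<and> y {v,z}) :: nat))"
  define cb where "cb = (\<lambda>y::nat set \<Rightarrow> bool. (of_bool (y {u,x} \<and> y {u,z}) + of_bool (y {v,x} \<and> y {v,z}) :: nat))"
  define g0 where "g0 = (\<lambda>y::nat set \<Rightarrow> bool. (of_bool (\<not> y {u,v} \<and> \<not> y {x,z}) :: real))"
  define \<gamma> where "\<gamma> = (\<lambda>i j y. g0 y * of_bool (ca y = i \<and> cb y = j))"
  define Cs where "Cs = {{u,v},{x,z},{u,x},{u,z},{v,x},{v,z}}"
  have A: "finite (vpairs n)" by (rule finite_vpairs)
  let ?E = "measure_pmf.expectation (Om n p)"
  have pt: "Xf n {u,v} y * Xf n {x,z} y =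
      \<gamma> 0 0 y * of_bool (card {w\<in>R. \<alpha> w y} = 1) * of_bool (card {w\<in>R. \<beta> w y} = 1)
    + \<gamma> 0 1 y * of_bool (card {w\<in>R. \<alpha> w y} = 1) * of_bool (card {w\<in>R. \<beta> w y} = 0)
    + \<gamma> 1 0 y * of_bool (card {w\<in>R. \<alpha> w y} = 0) * of_bool (card {w\<in>R. \<beta> w y} = 1)
    + \<gamma> 1 1 y * of_bool (card {w\<in>R. \<alpha> w y} = 0) * of_bool (card {w\<in>R. \<beta> w y} = 0)" for y
  proof -
    have "{w\<in>{1..n}. w \<notin> {u,v} \<and> (\<forall>a\<in>{u,v}. y {a,w})} = {w\<in>R. \<alpha> w y} \<union> {t\<in>{x,z}. \<alpha> t y}"
      using inn d unfolding R_def \<alpha>_def by auto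
    hence "card {w\<in>{1..n}. w \<notin> {u,v} \<and> (\<forall>a\<in>{u,v}. y {a,w})} = card ({w\<in>R. \<alpha> w y} \<union> {t\<in>{x,z}. \<alpha> t y})" by simp
    also have "\<dots> = card {w\<in>R. \<alpha> w y} + card {t\<in>{x,z}. \<alpha> t y}"
      using R d by (intro card_Un_disjoint) (auto simp: R_def)
    also have "card {t\<in>{x,z}. \<alpha> t y} = ca y"
      using d card_two[of x z "\<lambda>t. \<alpha> t y"] by (simp add: ca_def \<alpha>_def insert_commute)
    finally have c1: "card {w\<in>{1..n}. w \<notin> {u,v} \<and> (\<forall>a\<in>{u,v}. y {a,w})} = card {w\<in>R. \<alpha> w y} + ca y" .
    have "{w\<in>{1..n}. w \<notin> {x,z} \<and> (\<forall>a\<in>{x,z}. y {a,w})} = {w\<in>R. \<beta> w y} \<union> {t\<in>{u,v}. \<beta> t y}"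
      using inn d unfolding R_def \<beta>_def by auto
    hence "card {w\<in>{1..n}. w \<notin> {x,z} \<and> (\<forall>a\<in>{x,z}. y {a,w})} = card ({w\<in>R. \<beta> w y} \<union> {t\<in>{u,v}. \<beta> t y})" by simp
    also have "\<dots> = card {w\<in>R. \<beta> w y} + card {t\<in>{u,v}. \<beta> t y}"
      using R d by (intro card_Un_disjoint) (auto simp: R_def)
    also have "card {t\<in>{u,v}. \<beta> t y} = cb y"
      using d card_two[of u v "\<lambda>t. \<beta> t y"] by (simp add: cb_def \<beta>_def insert_commute)
    finally have c2: "card {w\<in>{1..n}. w \<notin> {x,z} \<and> (\<forall>a\<in>{x,z}. y {a,w})} = card {w\<in>R. \<beta> w y} + cb y" .
    have "Xf n {u,v} y * Xf n {x,z} y = g0 y * (of_bool (card {w\<in>R. \<alpha> w y} + ca y = 1) * of_bool (card {w\<in>R. \<beta> w y} + cb y = 1))"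
      unfolding Xf_def g0_def c1 c2 by auto
    also have "\<dots> = g0 y * ((of_bool (ca y = 0) * of_bool (card {w\<in>R. \<alpha> w y} = 1) + of_bool (ca y = 1) * of_bool (card {w\<in>R. \<alpha> w y} = 0))
        * (of_bool (cb y = 0) * of_bool (card {w\<in>R. \<beta> w y} = 1) + of_bool (cb y = 1) * of_bool (card {w\<in>R. \<beta> w y} = 0)))"
      by (simp only: of_bool_sum1)
    also have "\<dots> = \<gamma> 0 0 y * of_bool (card {w\<in>R. \<alpha> w y} = 1) * of_bool (card {w\<in>R. \<beta> w y} = 1)
    + \<gamma> 0 1 y * of_bool (card {w\<in>R. \<alpha> w y} = 1) * of_bool (card {w\<in>R. \<beta> w y} = 0)
    + \<gamma> 1 0 y * of_bool (card {w\<in>R. \<alpha> w y} = 0) * of_bool (card {w\<in>R. \<beta> w y} = 1)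
    + \<gamma> 1 1 y * of_bool (card {w\<in>R. \<alpha> w y} = 0) * of_bool (card {w\<in>R. \<beta> w y} = 0)"
      unfolding \<gamma>_def by (simp add: algebra_simps)
    finally show ?thesis .
  qed
  have BA: "B w \<subseteq> vpairs n" if "w \<in> R" for w
    using that d inn unfolding B_def R_def by (auto intro!: pair_in)
  have disj: "B w \<inter> B w' = {}" if "w \<in> R" "w' \<in> R" "w \<noteq> w'" for w w'
    using that d unfolding B_def R_def by (auto simp: doubleton_eq_iff)
  have C: "Cs \<subseteq> vpairs n" using d inn unfolding Cs_def by (auto intro!: pair_in)
  have BC: "B w \<inter> Cs = {}" if "w \<in> R" for w
    using that d unfolding B_def R_def Cs_def by (auto simp: doubleton_eq_iff)
  have dC: "dep Cs (\<gamma> i j)" for i j unfolding \<gamma>_def g0_def ca_def cb_def Cs_def by (rule dep_I) auto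
  have d\<alpha>: "dep (B w) (\<alpha> w)" for w unfolding \<alpha>_def B_def by (rule dep_I) auto
  have d\<beta>: "dep (B w) (\<beta> w)" for w unfolding \<beta>_def B_def by (rule dep_I) auto
  have ne: "{u,w} \<noteq> {v,w}" "{u,w} \<noteq> {x,w}" "{u,w} \<noteq> {z,w}" "{v,w} \<noteq> {x,w}" "{v,w} \<noteq> {z,w}" "{x,w} \<noteq> {z,w}" if "w \<in> R" for w
    using that d unfolding R_def by (auto simp: doubleton_eq_iff)
  have s11: "?E (\<lambda>y. of_bool (\<alpha> w y \<and> \<beta> w y)) = p^4" if "w \<in> R" for w
    using E4g[OF A BA[OF that, unfolded B_def] ne[OF that] p, of "\<lambda>A B C D. (A \<and> B) \<and> (C \<and> D)"]
    by (simp add: Om_def \<alpha>_def \<beta>_def ex1_def power4_eq_xxxx)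
  have s10: "?E (\<lambda>y. of_bool (\<alpha> w y \<and> \<not> \<beta> w y)) = p^2*(1-p^2)" if "w \<in> R" for w
    using E4g[OF A BA[OF that, unfolded B_def] ne[OF that] p, of "\<lambda>A B C D. (A \<and> B) \<and> \<not>(C \<and> D)"]
    by (simp add: Om_def \<alpha>_def \<beta>_def ex1_def power2_eq_square algebra_simps)
  have s01: "?E (\<lambda>y. of_bool (\<not> \<alpha> w y \<and> \<beta> w y)) = p^2*(1-p^2)" if "w \<in> R" for w
    using E4g[OF A BA[OF that, unfolded B_def] ne[OF that] p, of "\<lambda>A B C D. \<not>(A \<and> B) \<and> (C \<and> D)"]
    by (simp add: Om_def \<alpha>_def \<beta>_def ex1_def power2_eq_square algebra_simps)
  have s00: "?E (\<lambda>y. of_bool (\<not> \<alpha> w y \<and> \<not> \<beta> w y)) = (1-p^2)^2" if "w \<in> R" for w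
    using E4g[OF A BA[OF that, unfolded B_def] ne[OF that] p, of "\<lambda>A B C D. \<not>(A \<and> B) \<and> \<not>(C \<and> D)"]
    by (simp add: Om_def \<alpha>_def \<beta>_def ex1_def power2_eq_square algebra_simps)
  have W11: "?E (\<lambda>y. \<gamma> i j y * of_bool (card {w\<in>R. \<alpha> w y} = 1) * of_bool (card {w\<in>R. \<beta> w y} = 1))
     = ?E (\<gamma> i j) * (real (card R) * (p^4 * ((1-p^2)^2) ^ (card R - 1) + real (card R - 1) * (p^2*(1-p^2)) * (p^2*(1-p^2)) * ((1-p^2)^2) ^ (card R - 2)))" for i j
    unfolding Om_def
    by (rule witness11[OF A R BA disj C BC dC d\<alpha> d\<beta>])
       (use s11 s10 s01 s00 in \<open>simp_all add: Om_def\<close>)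
  have W10: "?E (\<lambda>y. \<gamma> i j y * of_bool (card {w\<in>R. \<alpha> w y} = 1) * of_bool (card {w\<in>R. \<beta> w y} = 0))
     = ?E (\<gamma> i j) * (real (card R) * ((p^2*(1-p^2)) * ((1-p^2)^2) ^ (card R - 1)))" for i j
    unfolding Om_def
    by (rule witness10[OF A R BA disj C BC dC d\<alpha> d\<beta>])
       (use s11 s10 s01 s00 in \<open>simp_all add: Om_def\<close>)
  have W01: "?E (\<lambda>y. \<gamma> i j y * of_bool (card {w\<in>R. \<alpha> w y} = 0) * of_bool (card {w\<in>R. \<beta> w y} = 1))
     = ?E (\<gamma> i j) * (real (card R) * ((p^2*(1-p^2)) * ((1-p^2)^2) ^ (card R - 1)))" for i j
    unfolding Om_def
    by (rule witness01[OF A R BA disj C BC dC d\<alpha> d\<beta>])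
       (use s11 s10 s01 s00 in \<open>simp_all add: Om_def\<close>)
  have W00: "?E (\<lambda>y. \<gamma> i j y * of_bool (card {w\<in>R. \<alpha> w y} = 0) * of_bool (card {w\<in>R. \<beta> w y} = 0))
     = ?E (\<gamma> i j) * (((1-p^2)^2) ^ card R)" for i j
    unfolding Om_def
    by (rule witness00[OF A R BA disj C BC dC d\<alpha> d\<beta>])
       (use s11 s10 s01 s00 in \<open>simp_all add: Om_def\<close>)
  have C1: "{{u,v},{x,z}} \<subseteq> vpairs n" using d inn by (auto intro!: pair_in)
  have C2: "{{u,x},{u,z},{v,x},{v,z}} \<subseteq> vpairs n" using d inn by (auto intro!: pair_in)
  have C12: "{{u,x},{u,z},{v,x},{v,z}} \<inter> {{u,v},{x,z}} = {}" using d by (auto simp: doubleton_eq_iff)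
  have dg0: "dep {{u,v},{x,z}} g0" unfolding g0_def by (rule dep_I) auto
  have ne6: "{u,x} \<noteq> {u,z}" "{u,x} \<noteq> {v,x}" "{u,x} \<noteq> {v,z}" "{u,z} \<noteq> {v,x}" "{u,z} \<noteq> {v,z}" "{v,x} \<noteq> {v,z}"
    using d by (auto simp: doubleton_eq_iff)
  have neuv: "{u,v} \<noteq> {x,z}" using d by (auto simp: doubleton_eq_iff)
  have Eg0: "?E g0 = (1-p)^2"
  proof -
    have "?E g0 = measure_pmf.expectation (Pi_pmf {{u,v},{x,z}} False (\<lambda>_. bernoulli_pmf p)) g0"
      unfolding Om_def by (rule E_blk[OF A C1 dg0])
    also have "\<dots> = (1 - p)^2" using p neuv by (simp add: E_Pi_insert g0_def power2_eq_square)
    finally show ?thesis .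
  qed
  have Eg: "?E (\<gamma> i j) = (1-p)^2 * ex1 p (\<lambda>A. ex1 p (\<lambda>B. ex1 p (\<lambda>C. ex1 p (\<lambda>D.
      of_bool (of_bool (A \<and> C) + of_bool (B \<and> D) = (i::nat) \<and> of_bool (A \<and> B) + of_bool (C \<and> D) = (j::nat))))))" for i j
  proof -
    have dh: "dep {{u,x},{u,z},{v,x},{v,z}} (\<lambda>y. (of_bool (ca y = i \<and> cb y = j) :: real))"
      unfolding ca_def cb_def by (rule dep_I) auto
    have "?E (\<gamma> i j) = ?E g0 * ?E (\<lambda>y. of_bool (ca y = i \<and> cb y = j))"
      unfolding \<gamma>_def Om_def by (rule indep2[OF A C1 C12 dg0 dh])
    also have "?E (\<lambda>y. of_bool (ca y = i \<and> cb y = j)) = ex1 p (\<lambda>A. ex1 p (\<lambda>B. ex1 p (\<lambda>C. ex1 p (\<lambda>D.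
      of_bool (of_bool (A \<and> C) + of_bool (B \<and> D) = (i::nat) \<and> of_bool (A \<and> B) + of_bool (C \<and> D) = (j::nat))))))"
      using E4g[OF A C2 ne6 p, of "\<lambda>A B C D. of_bool (A \<and> C) + of_bool (B \<and> D) = i \<and> of_bool (A \<and> B) + of_bool (C \<and> D) = j"]
      unfolding Om_def ca_def cb_def by simp
    finally show ?thesis using Eg0 by simp
  qed
  have g00: "?E (\<gamma> 0 0) = (1-p)^2 * ((1-p)^4 + 4*p*(1-p)^3 + 2*p^2*(1-p)^2)"
    unfolding Eg by (simp add: ex1_def power2_eq_square power3_eq_cube power4_eq_xxxx algebra_simps)
  have g01: "?E (\<gamma> 0 1) = (1-p)^2 * (2*p^2*(1-p)^2)"
    unfolding Eg by (simp add: ex1_def power2_eq_square algebra_simps)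
  have g10: "?E (\<gamma> 1 0) = (1-p)^2 * (2*p^2*(1-p)^2)"
    unfolding Eg by (simp add: ex1_def power2_eq_square algebra_simps)
  have g11: "?E (\<gamma> 1 1) = (1-p)^2 * (4*p^3*(1-p))"
    unfolding Eg by (simp add: ex1_def power2_eq_square power3_eq_cube algebra_simps)
  have int: "integrable (measure_pmf (Om n p)) f" for f :: "_ \<Rightarrow> real"
    unfolding Om_def by (rule int_Pi[OF A])
  have "?E (\<lambda>y. Xf n {u,v} y * Xf n {x,z} y) =
      ?E (\<lambda>y. \<gamma> 0 0 y * of_bool (card {w\<in>R. \<alpha> w y} = 1) * of_bool (card {w\<in>R. \<beta> w y} = 1))
    + ?E (\<lambda>y. \<gamma> 0 1 y * of_bool (card {w\<in>R. \<alpha> w y} = 1) * of_bool (card {w\<in>R. \<beta> w y} = 0))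
    + ?E (\<lambda>y. \<gamma> 1 0 y * of_bool (card {w\<in>R. \<alpha> w y} = 0) * of_bool (card {w\<in>R. \<beta> w y} = 1))
    + ?E (\<lambda>y. \<gamma> 1 1 y * of_bool (card {w\<in>R. \<alpha> w y} = 0) * of_bool (card {w\<in>R. \<beta> w y} = 0))"
    by (simp only: pt Bochner_Integration.integral_add int)
  also have "\<dots> = (1-p)^2 * (((1-p)^4 + 4*p*(1-p)^3 + 2*p^2*(1-p)^2) *
          (real (n-4) * (p^4 * ((1-p^2)^2) ^ (n-5) + real (n-5) * (p^2*(1-p^2)) * (p^2*(1-p^2)) * ((1-p^2)^2) ^ (n-6)))
       + 2*p^2*(1-p)^2 * (real (n-4) * (p^2*(1-p^2) * ((1-p^2)^2) ^ (n-5)))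
       + 2*p^2*(1-p)^2 * (real (n-4) * (p^2*(1-p^2) * ((1-p^2)^2) ^ (n-5)))
       + 4*p^3*(1-p) * ((1-p^2)^2) ^ (n-4))"
    unfolding W11 W10 W01 W00 g00 g01 g10 g11 cR by (simp add: numeral_eq_Suc algebra_simps)
  finally show ?thesis .
qed

definition tset :: "nat \<Rightarrow> nat set set \<Rightarrow> nat set set" where
  "tset n G = {T. T \<subseteq> {1..n} \<and> card T = 3 \<and> (\<forall>x\<in>T. \<forall>y\<in>T. x \<noteq> y \<longrightarrow> {x, y} \<in> G)}"

definition wit :: "nat \<Rightarrow> nat set \<Rightarrow> nat set set \<Rightarrow> nat set" where
  "wit n e G = {w\<in>{1..n}. w \<notin> e \<and> (\<forall>a\<in>e. {a,w} \<in> G)}"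

lemma finite_tset: "finite (tset n G)"
  unfolding tset_def by (rule finite_subset[of _ "Pow {1..n}"]) auto

lemma triangles_tset: "triangles n G = card (tset n G)"
  unfolding triangles_def tset_def by simp

lemma tri_mono: "G' \<subseteq> G \<Longrightarrow> triangles n G' \<le> triangles n G"
  unfolding triangles_tset by (rule card_mono[OF finite_tset]) (auto simp: tset_def)

lemma tri_insert:
  assumes e: "e \<in> vpairs n" and eG: "e \<notin> G"
  shows "triangles n (insert e G) = triangles n G + card (wit n e G)"
proof -
  obtain u v where uv: "e = {u,v}" "u \<noteq> v" "u \<in> {1..n}" "v \<in> {1..n}" using e by (rule vpairsE)
  have eq: "tset n (insert e G) = tset n G \<union> (\<lambda>w. {u,v,w}) ` wit n e G"
  proof (intro equalityI subsetI)
    fix T assume T: "T \<in> tset n (insert e G)"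
    show "T \<in> tset n G \<union> (\<lambda>w. {u,v,w}) ` wit n e G"
    proof (cases "u \<in> T \<and> v \<in> T")
      case False
      hence "T \<in> tset n G" using T uv unfolding tset_def by (auto simp: doubleton_eq_iff)
      thus ?thesis by blast
    next
      case True
      have cT: "card T = 3" "T \<subseteq> {1..n}" using T unfolding tset_def by auto
      have fT: "finite T" using cT by (auto intro: finite_subset)
      have "card (T - {u,v}) = 1" using True cT fT uv by (simp add: card_Diff_subset)
      then obtain w where w: "T - {u,v} = {w}" by (auto simp: card_1_singleton_iff)
      hence Tw: "T = {u,v,w}" "w \<notin> {u,v}" using True by auto
      have "{u,w} \<in> insert e G" "{v,w} \<in> insert e G" using T Tw unfolding tset_def by auto
      hence "{u,w} \<in> G" "{v,w} \<in> G" using Tw uv by (auto simp: doubleton_eq_iff)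
      hence "w \<in> wit n e G" using Tw cT uv unfolding wit_def by auto
      thus ?thesis using Tw by blast
    qed
  next
    fix T assume "T \<in> tset n G \<union> (\<lambda>w. {u,v,w}) ` wit n e G"
    thus "T \<in> tset n (insert e G)"
    proof
      assume "T \<in> tset n G" thus ?thesis unfolding tset_def by auto
    next
      assume "T \<in> (\<lambda>w. {u,v,w}) ` wit n e G"
      then obtain w where w: "w \<in> wit n e G" "T = {u,v,w}" by auto
      have "{u,w} \<in> G" "{v,w} \<in> G" "w \<notin> {u,v}" "w \<in> {1..n}" using w uv unfolding wit_def by auto
      thus ?thesis using w uv unfolding tset_def by (auto simp: insert_commute card_insert_if)
    qed
  qed
  have disj: "tset n G \<inter> (\<lambda>w. {u,v,w}) ` wit n e G = {}"
    using eG uv unfolding tset_def by auto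
  have inj: "inj_on (\<lambda>w. {u,v,w}) (wit n e G)"
    using uv unfolding wit_def inj_on_def by auto
  have fw: "finite (wit n e G)" unfolding wit_def by auto
  show ?thesis unfolding triangles_tset eq
    using disj inj fw by (simp add: card_Un_disjoint finite_tset card_image)
qed

lemma Q1_eq:
  assumes n: "n \<ge> 2" and p: "0 \<le> p" "p \<le> 1"
  shows "Q1 n p G = p * card {e\<in>vpairs n. e \<notin> G \<and> card (wit n e G) = 1} / (n choose 2)"
proof -
  let ?P = "vpairs n"
  let ?S = "{G'. triangles n G' = triangles n G + 1}"
  have Pne: "?P \<noteq> {}" using pair_in[of 1 2 n] n by auto
  have res: "resample n p G = map_pmf (\<lambda>(e,b). if b then insert e G else G - {e})
        (pair_pmf (pmf_of_set ?P) (bernoulli_pmf p))"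
    unfolding resample_def map_pmf_def pair_pmf_def
    by (simp add: bind_assoc_pmf bind_return_pmf)
  have pre: "(\<lambda>(e,b). if b then insert e G else G - {e}) -` ?S = {e. triangles n (insert e G) = triangles n G + 1} \<times> {True}"
  proof -
    have "triangles n (G - {e}) \<noteq> triangles n G + 1" for e using tri_mono[of "G - {e}" G n] by auto
    thus ?thesis by (auto split: if_splits)
  qed
  let ?A = "{e. triangles n (insert e G) = triangles n G + 1}"
  have "Q1 n p G = measure_pmf.prob (pair_pmf (pmf_of_set ?P) (bernoulli_pmf p)) (?A \<times> {True})"
    unfolding Q1_def res measure_map_pmf pre ..
  also have "\<dots> = measure_pmf.prob (pair_pmf (pmf_of_set ?P) (bernoulli_pmf p)) ((?A \<inter> ?P) \<times> {True})"
    using Pne finite_vpairs by (intro measure_prob_cong_0) (auto simp: pmf_pair Pne finite_vpairs indicator_def)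
  also have "\<dots> = measure_pmf.prob (pmf_of_set ?P) (?A \<inter> ?P) * measure_pmf.prob (bernoulli_pmf p) {True}"
    using finite_vpairs by (intro measure_pmf_prob_product) (auto intro: countable_finite)
  also have "measure_pmf.prob (pmf_of_set ?P) (?A \<inter> ?P) = measure_pmf.prob (pmf_of_set ?P) ?A"
    using Pne finite_vpairs by (intro measure_prob_cong_0) auto
  also have "measure_pmf.prob (bernoulli_pmf p) {True} = p" using p by (simp add: measure_pmf_single)
  also have "measure_pmf.prob (pmf_of_set ?P) {e. triangles n (insert e G) = triangles n G + 1}
       = card (?P \<inter> {e. triangles n (insert e G) = triangles n G + 1}) / card ?P"
    using Pne finite_vpairs by (simp add: measure_pmf_of_set)
  also have "?P \<inter> {e. triangles n (insert e G) = triangles n G + 1} = {e\<in>?P. e \<notin> G \<and> card (wit n e G) = 1}"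
  proof -
    have "triangles n (insert e G) = triangles n G + 1 \<longleftrightarrow> e \<notin> G \<and> card (wit n e G) = 1" if "e \<in> ?P" for e
      using tri_insert[OF that] by (cases "e \<in> G") (auto simp: insert_absorb)
    thus ?thesis by auto
  qed
  finally show ?thesis by (simp add: card_vpairs)
qed

lemma pair_other:
  assumes "e \<in> vpairs n" "c \<in> e"
  obtains v where "e = {c,v}" "v \<noteq> c" "v \<in> {1..n}"
proof -
  obtain a b where ab: "e = {a,b}" "a \<noteq> b" "a \<in> {1..n}" "b \<in> {1..n}" using assms(1) by (rule vpairsE)
  show ?thesis
  proof (cases "c = a")
    case True thus ?thesis using ab that by auto
  next
    case False hence "c = b" using ab assms(2) by auto
    thus ?thesis using ab that[of a] by (auto simp: insert_commute)
  qed
qed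

definition E1 :: "nat \<Rightarrow> real \<Rightarrow> real" where
  "E1 n p = real (n-2) * ((1-p) * p^2 * (1-p^2)^(n-3))"
definition E2 :: "nat \<Rightarrow> real \<Rightarrow> real" where
  "E2 n p = (1-p)^2 * (real (n-3) * (p^3 * (1-2*p^2+p^3)^(n-4) + real (n-4) * (p^2*(1-p)) * (p^2*(1-p)) * (1-2*p^2+p^3)^(n-5)))"
definition E3 :: "nat \<Rightarrow> real \<Rightarrow> real" where
  "E3 n p = (1-p)^2 * (((1-p)^4 + 4*p*(1-p)^3 + 2*p^2*(1-p)^2) *
          (real (n-4) * (p^4 * ((1-p^2)^2) ^ (n-5) + real (n-5) * (p^2*(1-p^2)) * (p^2*(1-p^2)) * ((1-p^2)^2) ^ (n-6)))
       + 2*p^2*(1-p)^2 * (real (n-4) * (p^2*(1-p^2) * ((1-p^2)^2) ^ (n-5)))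
       + 2*p^2*(1-p)^2 * (real (n-4) * (p^2*(1-p^2) * ((1-p^2)^2) ^ (n-5)))
       + 4*p^3*(1-p) * ((1-p^2)^2) ^ (n-4))"

lemma sum_f:
  assumes e: "e \<in> vpairs n" and p: "0 \<le> p" "p \<le> 1"
  shows "(\<Sum>f\<in>vpairs n. measure_pmf.expectation (Om n p) (\<lambda>y. Xf n e y * Xf n f y))
    = E1 n p + real ((n choose 2) - 1 - ((n-2) choose 2)) * E2 n p + real ((n-2) choose 2) * E3 n p"
proof -
  let ?P = "vpairs n"
  let ?F = "\<lambda>f. measure_pmf.expectation (Om n p) (\<lambda>y. Xf n e y * Xf n f y)"
  define S1 where "S1 = {f\<in>?P. f \<noteq> e \<and> f \<inter> e \<noteq> {}}"
  define S0 where "S0 = {f\<in>?P. f \<inter> e = {}}"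
  obtain u v where uv: "e = {u,v}" "u \<noteq> v" "u \<in> {1..n}" "v \<in> {1..n}" using e by (rule vpairsE)
  have Pd: "?P = insert e (S1 \<union> S0)" "e \<notin> S1 \<union> S0" "S1 \<inter> S0 = {}"
    using e uv unfolding S1_def S0_def by auto
  have fin: "finite S1" "finite S0" unfolding S1_def S0_def using finite_vpairs by auto
  have cS0: "card S0 = (n-2) choose 2"
  proof -
    have "S0 = {f. f \<subseteq> {1..n} - e \<and> card f = 2}" unfolding S0_def vpairs_def by auto
    moreover have "card ({1..n} - e) = n - 2" using uv by (simp add: card_Diff_subset)
    ultimately show ?thesis using n_subsets[of "{1..n} - e" 2] by simp
  qed
  have cS1: "card S1 = (n choose 2) - 1 - ((n-2) choose 2)"
  proof -
    have "card ?P = 1 + card S1 + card S0" using Pd fin by (simp add: card_Un_disjoint)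
    thus ?thesis using cS0 card_vpairs[of n] by simp
  qed
  have F_e: "?F e = E1 n p"
  proof -
    have "(\<lambda>y. Xf n e y * Xf n e y) = Xf n e" by (auto simp: Xf_def)
    thus ?thesis using E_same[OF uv(2-4) p] uv(1) by (simp add: E1_def)
  qed
  have F1: "?F f = E2 n p" if f: "f \<in> S1" for f
  proof -
    from f obtain c where c: "c \<in> f" "c \<in> e" unfolding S1_def by auto
    have fP: "f \<in> ?P" using f unfolding S1_def by auto
    obtain v' where v': "e = {c,v'}" "v' \<noteq> c" "v' \<in> {1..n}" using pair_other[OF e c(2)] .
    obtain x where x: "f = {c,x}" "x \<noteq> c" "x \<in> {1..n}" using pair_other[OF fP c(1)] .
    have "x \<noteq> v'" using f v' x unfolding S1_def by auto
    moreover have "c \<in> {1..n}" using c e unfolding vpairs_def by auto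
    ultimately show ?thesis using E_share[of c v' x n p] v' x p by (simp add: E2_def)
  qed
  have F0: "?F f = E3 n p" if f: "f \<in> S0" for f
  proof -
    have fP: "f \<in> ?P" using f unfolding S0_def by auto
    obtain x z where xz: "f = {x,z}" "x \<noteq> z" "x \<in> {1..n}" "z \<in> {1..n}" using fP by (rule vpairsE)
    have "u \<noteq> x" "u \<noteq> z" "v \<noteq> x" "v \<noteq> z" using f xz uv unfolding S0_def by auto
    thus ?thesis using E_disj[of u v x z n p] uv xz p by (simp add: E3_def)
  qed
  have "(\<Sum>f\<in>?P. ?F f) = ?F e + (\<Sum>f\<in>S1. ?F f) + (\<Sum>f\<in>S0. ?F f)"
    using Pd fin by (simp add: sum.union_disjoint)
  also have "\<dots> = E1 n p + real (card S1) * E2 n p + real (card S0) * E3 n p"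
    using F_e F1 F0 by simp
  finally show ?thesis using cS0 cS1 by simp
qed

lemma E_single:
  assumes e: "e \<in> vpairs n" and p: "0 \<le> p" "p \<le> 1"
  shows "measure_pmf.expectation (Om n p) (Xf n e) = E1 n p"
proof -
  obtain u v where uv: "e = {u,v}" "u \<noteq> v" "u \<in> {1..n}" "v \<in> {1..n}" using e by (rule vpairsE)
  thus ?thesis using E_same[OF uv(2-4) p] by (simp add: E1_def)
qed

lemma Q1_graph:
  assumes n: "n \<ge> 2" and p: "0 \<le> p" "p \<le> 1"
  shows "Q1 n p {e \<in> vpairs n. y e} = p / real (n choose 2) * (\<Sum>e\<in>vpairs n. Xf n e y)"
proof -
  let ?G = "{e \<in> vpairs n. y e}"
  have "{e\<in>vpairs n. e \<notin> ?G \<and> card (wit n e ?G) = 1} = vpairs n \<inter> {e. \<not> y e \<and> card {w\<in>{1..n}. w \<notin> e \<and> (\<forall>a\<in>e. y {a,w})} = 1}"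
  proof -
    have "wit n e ?G = {w\<in>{1..n}. w \<notin> e \<and> (\<forall>a\<in>e. y {a,w})}" if "e \<in> vpairs n" for e
    proof -
      have "{a,w} \<in> vpairs n" if "a \<in> e" "w \<in> {1..n}" "w \<notin> e" for a w
        using that \<open>e \<in> vpairs n\<close> by (intro pair_in) (auto simp: vpairs_def)
      thus ?thesis unfolding wit_def by auto
    qed
    thus ?thesis by auto
  qed
  moreover have "(\<Sum>e\<in>vpairs n. Xf n e y) = real (card (vpairs n \<inter> {e. \<not> y e \<and> card {w\<in>{1..n}. w \<notin> e \<and> (\<forall>a\<in>e. y {a,w})} = 1}))"
    unfolding Xf_def using finite_vpairs by simp
  ultimately show ?thesis using Q1_eq[OF n p, of ?G] by simp
qed

lemma var_exact:
  assumes n: "n \<ge> 2" and p: "0 \<le> p" "p \<le> 1"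
  shows "measure_pmf.variance (gnp n p) (Q1 n p) =
    (p / real (n choose 2))^2 * (real (n choose 2) *
       (E1 n p + real ((n choose 2) - 1 - ((n-2) choose 2)) * E2 n p + real ((n-2) choose 2) * E3 n p)
      - (real (n choose 2) * E1 n p)^2)"
proof -
  let ?M = "Om n p"
  let ?E = "measure_pmf.expectation ?M"
  let ?P = "vpairs n"
  let ?c = "p / real (n choose 2)"
  define S where "S = (\<lambda>y. \<Sum>e\<in>?P. Xf n e y)"
  have int: "integrable (measure_pmf ?M) f" for f :: "_ \<Rightarrow> real"
    unfolding Om_def by (rule int_Pi[OF finite_vpairs])
  have gnp: "gnp n p = map_pmf (\<lambda>y. {e \<in> vpairs n. y e}) ?M" unfolding gnp_def Om_def ..
  have "measure_pmf.variance (gnp n p) (Q1 n p) = measure_pmf.variance ?M (\<lambda>y. ?c * S y)"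
    unfolding gnp using Q1_graph[OF n p] by (simp add: S_def)
  also have "\<dots> = ?E (\<lambda>y. (?c * S y)^2) - (?E (\<lambda>y. ?c * S y))^2"
    by (rule measure_pmf.variance_eq) (simp_all add: int)
  also have "?E (\<lambda>y. (?c * S y)^2) = ?c^2 * (\<Sum>e\<in>?P. \<Sum>f\<in>?P. ?E (\<lambda>y. Xf n e y * Xf n f y))"
  proof -
    have "(\<lambda>y. (?c * S y)^2) = (\<lambda>y. ?c^2 * (\<Sum>e\<in>?P. \<Sum>f\<in>?P. Xf n e y * Xf n f y))"
      unfolding S_def by (simp add: power2_eq_square sum_product mult_ac)
    thus ?thesis by (simp add: int Bochner_Integration.integral_sum)
  qed
  also have "(\<Sum>e\<in>?P. \<Sum>f\<in>?P. ?E (\<lambda>y. Xf n e y * Xf n f y))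
     = real (n choose 2) * (E1 n p + real ((n choose 2) - 1 - ((n-2) choose 2)) * E2 n p + real ((n-2) choose 2) * E3 n p)"
    using sum_f[OF _ p] by (simp add: card_vpairs)
  also have "?E (\<lambda>y. ?c * S y) = ?c * (real (n choose 2) * E1 n p)"
    unfolding S_def using E_single[OF _ p] by (simp add: int Bochner_Integration.integral_sum card_vpairs)
  finally have X: "measure_pmf.variance (gnp n p) (Q1 n p) = ?c^2 * (real (n choose 2) *
       (E1 n p + real ((n choose 2) - 1 - ((n-2) choose 2)) * E2 n p + real ((n-2) choose 2) * E3 n p))
      - (?c * (real (n choose 2) * E1 n p))^2" .
  show ?thesis unfolding X by (simp only: power_mult_distrib right_diff_distrib)
qed

lemma ch2: "real (m choose 2) = real m * (real m - 1) / 2"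
proof (induction m)
  case (Suc m) thus ?case by (simp add: numeral_2_eq_2 field_simps)
qed simp

lemma ch3: "real (m choose 3) = real m * (real m - 1) * (real m - 2) / 6"
proof (induction m)
  case (Suc m)
  have "Suc m choose 3 = (m choose 2) + (m choose 3)" by (simp add: numeral_3_eq_3 numeral_2_eq_2)
  thus ?case using Suc ch2[of m] by (simp add: field_simps)
qed simp

lemma ch4: "real (m choose 4) = real m * (real m - 1) * (real m - 2) * (real m - 3) / 24"
proof (induction m)
  case (Suc m)
  have "Suc m choose 4 = (m choose 3) + (m choose 4)" by (simp add: numeral_3_eq_3 eval_nat_numeral)
  thus ?case using Suc ch3[of m] by (simp add: field_simps)
qed simp

lemma poly_id2:
  fixes p K Q X Y :: real
  defines "q \<equiv> 1 - p^2" and "b \<equiv> (1-p)*(1+p-p^2)"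
  shows "2*(K+4)*p^4*(1-p)*Q*q^3*(1-p^2*(1-p)*Q*q^3) + 4*(K+4)*(K+3)*p^5*(1-p)^2*((X*Y)*b^2-p*Q^2*q^6) + 4*(K+4)*(K+3)*p^5*(1-p)^2*Q^2*q^4*(1-p-p*q^2) + 4*(K+4)*(K+3)*(K+2)*p^6*(1-p)^2*(X*(1-p)^3*(Y*(1+p-p^2))-Q^2*q^6) + 4*(K+4)*(K+3)*(K+2)*p^6*(1-p)^2*Q^2*q^3*(-2*p+4*p^2-3*p^4+p^6) + (K+4)*(K+3)*(K+2)*p^6*(1-p)^2*Q^2*q^2*(4*p^3-7*p^4+4*p^6-p^8) + (K+4)*(K+3)*(K+2)*(K+1)*p^6*(1-p)^2*Q^2*q^2*(4*p^3-7*p^4+4*p^6-p^8) = p^2*(2*(K+4)*((1-p)*p^2*Q*q^3)+2*(2*(K+4))*(1-p)^2*((K+3)*(p^3*(X*Y)*b^2+(K+2)*(p^2*(1-p))^2*(X*Y)*b))+(K+4)*(K+3)*(1-p)^2*(((1-p)^4+4*p*(1-p)^3+2*p^2*(1-p)^2)*((K+2)*(p^4*Q^2*q^2+(K+1)*(p^2*q)^2*Q^2))+2*(2*p^2*(1-p)^2*((K+2)*(p^2*q*Q^2*q^2)))+4*p^3*(1-p)*Q^2*q^4)-(K+6)*(K+5)*((K+4)*((1-p)*p^2*Q*q^3))^2) + 2*(5*(K+6)^2-23*(K+6)+26)*p^6*(1-p)^2*Q^2*q^6"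
  unfolding q_def b_def by algebra

lemma poly_id:
  fixes p K Q X Y :: real
  assumes K: "K \<ge> 0"
  defines "q \<equiv> 1 - p^2" and "b \<equiv> (1-p)*(1+p-p^2)"
  shows "(K+4)*p^4*(1-p)*Q*q^3*(1-p^2*(1-p)*Q*q^3) + 4*((K+4)*(K+3)/2)*p^5*(1-p)^2*((X*Y)*b^2-p*Q^2*q^6) + 4*((K+4)*(K+3)/2)*p^5*(1-p)^2*Q^2*q^4*(1-p-p*q^2) + 12*((K+4)*(K+3)*(K+2)/6)*p^6*(1-p)^2*(X*(1-p)^3*(Y*(1+p-p^2))-Q^2*q^6) + 12*((K+4)*(K+3)*(K+2)/6)*p^6*(1-p)^2*Q^2*q^3*(-2*p+4*p^2-3*p^4+p^6) + 3*((K+4)*(K+3)*(K+2)/6)*p^6*(1-p)^2*Q^2*q^2*(4*p^3-7*p^4+4*p^6-p^8) + 12*((K+4)*(K+3)*(K+2)*(K+1)/24)*p^6*(1-p)^2*Q^2*q^2*(4*p^3-7*p^4+4*p^6-p^8) = p^2*((K+4)*((1-p)*p^2*Q*q^3)+(((K+6)*(K+5)/2)-1-((K+4)*(K+3)/2))*(1-p)^2*((K+3)*(p^3*(X*Y)*b^2+(K+2)*(p^2*(1-p))^2*(X*Y)*b))+((K+4)*(K+3)/2)*(1-p)^2*(((1-p)^4+4*p*(1-p)^3+2*p^2*(1-p)^2)*((K+2)*(p^4*Q^2*q^2+(K+1)*(p^2*q)^2*Q^2))+2*(2*p^2*(1-p)^2*((K+2)*(p^2*q*Q^2*q^2)))+4*p^3*(1-p)*Q^2*q^4)-((K+6)*(K+5)/2)*((K+4)*((1-p)*p^2*Q*q^3))^2)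 + (5*(K+6)^2-23*(K+6)+26)*p^6*(1-p)^2*Q^2*q^6"
proof -
  have N: "(K+6)*(K+5) \<noteq> 0" using K by (simp add: add_nonneg_eq_0_iff)
  show ?thesis unfolding q_def b_def using N by (simp add: field_simps) algebra
qed

lemma final_comb:
  fixes D A E S c1 c2 c3 c4 c5 c6 c7 r1 r2 r3 r4 r5 r6 r7 p :: real
  assumes "D \<noteq> 0" "c1*r1 + c2*r2 + c3*r3 + c4*r4 + c5*r5 + c6*r6 + c7*r7 = p^2*(A - D*E^2) + S"
  shows "(p/D)^2*(D*A - (D*E)^2) + S/D = c1/D*r1 + c2/D*r2 + c3/D*r3 + c4/D*r4 + c5/D*r5 + c6/D*r6 + c7/D*r7"
proof -
  have "c1/D*r1 + c2/D*r2 + c3/D*r3 + c4/D*r4 + c5/D*r5 + c6/D*r6 + c7/D*r7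
      = (c1*r1 + c2*r2 + c3*r3 + c4*r4 + c5*r5 + c6*r6 + c7*r7) / D"
    by (simp add: add_divide_distrib)
  also have "\<dots> = (p^2*(A - D*E^2) + S) / D" using assms(2) by simp
  also have "\<dots> = (p/D)^2*(D*A - (D*E)^2) + S/D"
    using assms(1) by (simp add: field_simps power2_eq_square)
  finally show ?thesis ..
qed

lemma big_case:
  fixes k :: nat and p :: real
  assumes n: "n = k + 6"
  shows "(p / real (n choose 2))^2 * (real (n choose 2) * (E1 n p + real ((n choose 2) - 1 - ((n-2) choose 2)) * E2 n p + real ((n-2) choose 2) * E3 n p) - (real (n choose 2) * E1 n p)^2) + ((5*real n^2 - 23*real n + 26) * (p^6 * ((1-p)^2 * (1-p^2)^(2*n-6)))) / real (n choose 2) = 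
      real (n - 2) / real (n choose 2) * p^4 * (1 - p) * (1 - p^2)^(n - 3)
        * (1 - p^2 * (1 - p) * (1 - p^2)^(n - 3))
    + 4 * real ((n - 2) choose 2) / real (n choose 2) * p^5 * (1 - p)^2
        * ((1 - 2*p^2 + p^3)^(n - 4) - p * (1 - p^2)^(2*n - 6))
    + 4 * real ((n - 2) choose 2) / real (n choose 2) * p^5 * (1 - p)^2
        * (1 - p^2)^(2*n - 8) * (1 - p - p * (1 - p^2)^2)
    + 12 * real ((n - 2) choose 3) / real (n choose 2) * p^6 * (1 - p)^2
        * ((1 - p)^(n - 3) * (1 + p - p^2)^(n - 5) - (1 - p^2)^(2*n - 6))
    + 12 * real ((n - 2) choose 3) / real (n choose 2) * p^6 * (1 - p)^2
        * (1 - p^2)^(2*n - 9) * (- 2*p + 4*p^2 - 3*p^4 + p^6)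
    + 3 * real ((n - 2) choose 3) / real (n choose 2) * p^6 * (1 - p)^2
        * (1 - p^2)^(2*n - 10) * (4*p^3 - 7*p^4 + 4*p^6 - p^8)
    + 12 * real ((n - 2) choose 4) / real (n choose 2) * p^6 * (1 - p)^2
        * (1 - p^2)^(2*n - 10) * (4*p^3 - 7*p^4 + 4*p^6 - p^8)"
proof -
  define K where "K = real k"
  define Q where "Q = (1-p^2)^k"
  define X where "X = (1-p)^k"
  define Y where "Y = (1+p-p^2)^k"
  have K0: "K \<ge> 0" unfolding K_def by simp
  have nz: "K + 6 \<noteq> 0" "K + 5 \<noteq> 0" using K0 by linarith+
  have b: "(1-2*p^2+p^3)^k = X * Y" unfolding X_def Y_def
    by (simp add: power_mult_distrib[symmetric] algebra_simps power2_eq_square power3_eq_cube)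
  have q2: "((1-p^2)^2)^k = Q^2" unfolding Q_def by (metis power_mult mult.commute)
  have q2k: "(1-p^2)^(2*k) = Q^2" unfolding Q_def by (metis power_mult mult.commute)
  have c2: "(k + 6 choose 2) = (k+4 choose 2) + (2*k+9)"
  proof -
    have "real (k + 6 choose 2) = real ((k+4 choose 2) + (2*k+9))" by (simp add: ch2 field_simps)
    thus ?thesis by (simp only: of_nat_eq_iff)
  qed
  have Nr: "real (n choose 2) = (K+6)*(K+5)/2" unfolding n K_def by (simp add: ch2 field_simps)
  have C2r: "real ((n-2) choose 2) = (K+4)*(K+3)/2" unfolding n K_def by (simp add: ch2 field_simps)
  have C3r: "real ((n-2) choose 3) = (K+4)*(K+3)*(K+2)/6" unfolding n K_def by (simp add: ch3 field_simps)
  have C4r: "real ((n-2) choose 4) = (K+4)*(K+3)*(K+2)*(K+1)/24" unfolding n K_def by (simp add: ch4 field_simps)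
  have rn: "real n = K + 6" "real (n-2) = K+4" "real (n-3) = K+3" "real (n-4) = K+2" "real (n-5) = K+1" unfolding n K_def by simp_all
  have e: "n - 2 = k + 4" "n - 3 = k + 3" "n - 4 = k + 2" "n - 5 = k + 1" "n - 6 = k"
     "2*n - 6 = 2*k + 6" "2*n - 8 = 2*k + 4" "2*n - 9 = 2*k + 3" "2*n - 10 = 2*k + 2" unfolding n by simp_all
  have M1n: "(n choose 2) - 1 - ((n-2) choose 2) = 2*k+8"
  proof -
    have "(n choose 2) - 1 - ((n-2) choose 2) = (k + 6 choose 2) - 1 - (k+4 choose 2)"
      unfolding e(1) unfolding n ..
    also have "\<dots> = ((k+4 choose 2) + (2*k+9)) - 1 - (k+4 choose 2)" by (simp only: c2)
    also have "\<dots> = 2*k+8" by simp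
    finally show ?thesis .
  qed
  have M1: "real ((n choose 2) - 1 - ((n-2) choose 2)) = 2*(K+4)" unfolding M1n K_def by simp
  have pw1: "(1-p^2)^(n-3) = Q * (1-p^2)^3" unfolding e Q_def by (simp add: power_add)
  have pw2: "(1-2*p^2+p^3)^(n-4) = X*Y*(1-2*p^2+p^3)^2" unfolding e power_add b ..
  have pw3: "(1-2*p^2+p^3)^(n-5) = X*Y*(1-2*p^2+p^3)" unfolding e by (simp add: power_add b)
  have pw4: "(1-p^2)^(2*n-6) = Q^2*(1-p^2)^6" unfolding e by (simp add: power_add q2k)
  have pw5: "(1-p^2)^(2*n-8) = Q^2*(1-p^2)^4" unfolding e by (simp add: power_add q2k)
  have pw6: "(1-p^2)^(2*n-9) = Q^2*(1-p^2)^3" unfolding e by (simp add: power_add q2k)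
  have pw7: "(1-p^2)^(2*n-10) = Q^2*(1-p^2)^2" unfolding e power_add q2k ..
  have pw8: "(1-p)^(n-3) = X*(1-p)^3" unfolding e X_def by (simp add: power_add)
  have pw9: "(1+p-p^2)^(n-5) = Y*(1+p-p^2)" unfolding e Y_def by (simp add: power_add)
  have pw10: "((1-p^2)^2)^(n-5) = Q^2*(1-p^2)^2" unfolding e power_add q2 by simp
  have pw11: "((1-p^2)^2)^(n-6) = Q^2" unfolding e by (simp add: q2)
  have pw12: "((1-p^2)^2)^(n-4) = Q^2*((1-p^2)^2)^2" unfolding e by (simp add: power_add q2)
  note pw = pw1 pw2 pw3 pw4 pw5 pw6 pw7 pw8 pw9 pw10 pw11 pw12
  show ?thesis
    apply (simp only: mult.assoc)
    apply (rule final_comb)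
    using nz apply (simp add: Nr)
    unfolding E1_def E2_def E3_def rn pw Nr C2r C3r C4r M1
    using nz apply (simp add: field_simps)
    apply algebra
    done
qed

lemma small_case2:
  fixes p :: real
  assumes n: "n = 2"
  shows "(p / real (n choose 2))^2 * (real (n choose 2) * (E1 n p + real ((n choose 2) - 1 - ((n-2) choose 2)) * E2 n p + real ((n-2) choose 2) * E3 n p) - (real (n choose 2) * E1 n p)^2) + ((5*real n^2 - 23*real n + 26) * (p^6 * ((1-p)^2 * (1-p^2)^(2*n-6)))) / real (n choose 2) = 
      real (n - 2) / real (n choose 2) * p^4 * (1 - p) * (1 - p^2)^(n - 3)
        * (1 - p^2 * (1 - p) * (1 - p^2)^(n - 3))
    + 4 * real ((n - 2) choose 2) / real (n choose 2) * p^5 * (1 - p)^2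
        * ((1 - 2*p^2 + p^3)^(n - 4) - p * (1 - p^2)^(2*n - 6))
    + 4 * real ((n - 2) choose 2) / real (n choose 2) * p^5 * (1 - p)^2
        * (1 - p^2)^(2*n - 8) * (1 - p - p * (1 - p^2)^2)
    + 12 * real ((n - 2) choose 3) / real (n choose 2) * p^6 * (1 - p)^2
        * ((1 - p)^(n - 3) * (1 + p - p^2)^(n - 5) - (1 - p^2)^(2*n - 6))
    + 12 * real ((n - 2) choose 3) / real (n choose 2) * p^6 * (1 - p)^2
        * (1 - p^2)^(2*n - 9) * (- 2*p + 4*p^2 - 3*p^4 + p^6)
    + 3 * real ((n - 2) choose 3) / real (n choose 2) * p^6 * (1 - p)^2
        * (1 - p^2)^(2*n - 10) * (4*p^3 - 7*p^4 + 4*p^6 - p^8)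
    + 12 * real ((n - 2) choose 4) / real (n choose 2) * p^6 * (1 - p)^2
        * (1 - p^2)^(2*n - 10) * (4*p^3 - 7*p^4 + 4*p^6 - p^8)"
  apply (simp only: mult.assoc)
  apply (rule final_comb)
   apply (simp add: n choose_two)
  apply (simp add: n E1_def E2_def E3_def ch2 ch3 ch4 choose_two field_simps)
  apply algebra?
  done

lemma small_case3:
  fixes p :: real
  assumes n: "n = 3"
  shows "(p / real (n choose 2))^2 * (real (n choose 2) * (E1 n p + real ((n choose 2) - 1 - ((n-2) choose 2)) * E2 n p + real ((n-2) choose 2) * E3 n p) - (real (n choose 2) * E1 n p)^2) + ((5*real n^2 - 23*real n + 26) * (p^6 * ((1-p)^2 * (1-p^2)^(2*n-6)))) / real (n choose 2) = 
      real (n - 2) / real (n choose 2) * p^4 * (1 - p) * (1 - p^2)^(n - 3)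
        * (1 - p^2 * (1 - p) * (1 - p^2)^(n - 3))
    + 4 * real ((n - 2) choose 2) / real (n choose 2) * p^5 * (1 - p)^2
        * ((1 - 2*p^2 + p^3)^(n - 4) - p * (1 - p^2)^(2*n - 6))
    + 4 * real ((n - 2) choose 2) / real (n choose 2) * p^5 * (1 - p)^2
        * (1 - p^2)^(2*n - 8) * (1 - p - p * (1 - p^2)^2)
    + 12 * real ((n - 2) choose 3) / real (n choose 2) * p^6 * (1 - p)^2
        * ((1 - p)^(n - 3) * (1 + p - p^2)^(n - 5) - (1 - p^2)^(2*n - 6))
    + 12 * real ((n - 2) choose 3) / real (n choose 2) * p^6 * (1 - p)^2
        * (1 - p^2)^(2*n - 9) * (- 2*p + 4*p^2 - 3*p^4 + p^6)
    + 3 * real ((n - 2) choose 3) / real (n choose 2) * p^6 * (1 - p)^2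
        * (1 - p^2)^(2*n - 10) * (4*p^3 - 7*p^4 + 4*p^6 - p^8)
    + 12 * real ((n - 2) choose 4) / real (n choose 2) * p^6 * (1 - p)^2
        * (1 - p^2)^(2*n - 10) * (4*p^3 - 7*p^4 + 4*p^6 - p^8)"
  apply (simp only: mult.assoc)
  apply (rule final_comb)
   apply (simp add: n choose_two)
  apply (simp add: n E1_def E2_def E3_def ch2 ch3 ch4 choose_two field_simps)
  apply algebra?
  done

lemma small_case4:
  fixes p :: real
  assumes n: "n = 4"
  shows "(p / real (n choose 2))^2 * (real (n choose 2) * (E1 n p + real ((n choose 2) - 1 - ((n-2) choose 2)) * E2 n p + real ((n-2) choose 2) * E3 n p) - (real (n choose 2) * E1 n p)^2) + ((5*real n^2 - 23*real n + 26) * (p^6 * ((1-p)^2 * (1-p^2)^(2*n-6)))) / real (n choose 2) = 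
      real (n - 2) / real (n choose 2) * p^4 * (1 - p) * (1 - p^2)^(n - 3)
        * (1 - p^2 * (1 - p) * (1 - p^2)^(n - 3))
    + 4 * real ((n - 2) choose 2) / real (n choose 2) * p^5 * (1 - p)^2
        * ((1 - 2*p^2 + p^3)^(n - 4) - p * (1 - p^2)^(2*n - 6))
    + 4 * real ((n - 2) choose 2) / real (n choose 2) * p^5 * (1 - p)^2
        * (1 - p^2)^(2*n - 8) * (1 - p - p * (1 - p^2)^2)
    + 12 * real ((n - 2) choose 3) / real (n choose 2) * p^6 * (1 - p)^2
        * ((1 - p)^(n - 3) * (1 + p - p^2)^(n - 5) - (1 - p^2)^(2*n - 6))
    + 12 * real ((n - 2) choose 3) / real (n choose 2) * p^6 * (1 - p)^2
        * (1 - p^2)^(2*n - 9) * (- 2*p + 4*p^2 - 3*p^4 + p^6)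
    + 3 * real ((n - 2) choose 3) / real (n choose 2) * p^6 * (1 - p)^2
        * (1 - p^2)^(2*n - 10) * (4*p^3 - 7*p^4 + 4*p^6 - p^8)
    + 12 * real ((n - 2) choose 4) / real (n choose 2) * p^6 * (1 - p)^2
        * (1 - p^2)^(2*n - 10) * (4*p^3 - 7*p^4 + 4*p^6 - p^8)"
  apply (simp only: mult.assoc)
  apply (rule final_comb)
   apply (simp add: n choose_two)
  apply (simp add: n E1_def E2_def E3_def ch2 ch3 ch4 choose_two field_simps)
  apply algebra?
  done

lemma small_case5:
  fixes p :: real
  assumes n: "n = 5"
  shows "(p / real (n choose 2))^2 * (real (n choose 2) * (E1 n p + real ((n choose 2) - 1 - ((n-2) choose 2)) * E2 n p + real ((n-2) choose 2) * E3 n p) - (real (n choose 2) * E1 n p)^2) + ((5*real n^2 - 23*real n + 26) * (p^6 * ((1-p)^2 * (1-p^2)^(2*n-6)))) / real (n choose 2) = 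
      real (n - 2) / real (n choose 2) * p^4 * (1 - p) * (1 - p^2)^(n - 3)
        * (1 - p^2 * (1 - p) * (1 - p^2)^(n - 3))
    + 4 * real ((n - 2) choose 2) / real (n choose 2) * p^5 * (1 - p)^2
        * ((1 - 2*p^2 + p^3)^(n - 4) - p * (1 - p^2)^(2*n - 6))
    + 4 * real ((n - 2) choose 2) / real (n choose 2) * p^5 * (1 - p)^2
        * (1 - p^2)^(2*n - 8) * (1 - p - p * (1 - p^2)^2)
    + 12 * real ((n - 2) choose 3) / real (n choose 2) * p^6 * (1 - p)^2
        * ((1 - p)^(n - 3) * (1 + p - p^2)^(n - 5) - (1 - p^2)^(2*n - 6))
    + 12 * real ((n - 2) choose 3) / real (n choose 2) * p^6 * (1 - p)^2
        * (1 - p^2)^(2*n - 9) * (- 2*p + 4*p^2 - 3*p^4 + p^6)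
    + 3 * real ((n - 2) choose 3) / real (n choose 2) * p^6 * (1 - p)^2
        * (1 - p^2)^(2*n - 10) * (4*p^3 - 7*p^4 + 4*p^6 - p^8)
    + 12 * real ((n - 2) choose 4) / real (n choose 2) * p^6 * (1 - p)^2
        * (1 - p^2)^(2*n - 10) * (4*p^3 - 7*p^4 + 4*p^6 - p^8)"
  apply (simp only: mult.assoc)
  apply (rule final_comb)
   apply (simp add: n choose_two)
  apply (simp add: n E1_def E2_def E3_def ch2 ch3 ch4 choose_two field_simps)
  apply algebra?
  done

theorem lemma11:
  fixes n :: nat and p :: real
  assumes "n \<ge> 2" and "0 \<le> p" and "p \<le> 1"
  shows "measure_pmf.variance (gnp n p) (Q1 n p) \<le>
      real (n - 2) / real (n choose 2) * p^4 * (1 - p) * (1 - p^2)^(n - 3)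
        * (1 - p^2 * (1 - p) * (1 - p^2)^(n - 3))
    + 4 * real ((n - 2) choose 2) / real (n choose 2) * p^5 * (1 - p)^2
        * ((1 - 2*p^2 + p^3)^(n - 4) - p * (1 - p^2)^(2*n - 6))
    + 4 * real ((n - 2) choose 2) / real (n choose 2) * p^5 * (1 - p)^2
        * (1 - p^2)^(2*n - 8) * (1 - p - p * (1 - p^2)^2)
    + 12 * real ((n - 2) choose 3) / real (n choose 2) * p^6 * (1 - p)^2
        * ((1 - p)^(n - 3) * (1 + p - p^2)^(n - 5) - (1 - p^2)^(2*n - 6))
    + 12 * real ((n - 2) choose 3) / real (n choose 2) * p^6 * (1 - p)^2
        * (1 - p^2)^(2*n - 9) * (- 2*p + 4*p^2 - 3*p^4 + p^6)
    + 3 * real ((n - 2) choose 3) / real (n choose 2) * p^6 * (1 - p)^2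
        * (1 - p^2)^(2*n - 10) * (4*p^3 - 7*p^4 + 4*p^6 - p^8)
    + 12 * real ((n - 2) choose 4) / real (n choose 2) * p^6 * (1 - p)^2
        * (1 - p^2)^(2*n - 10) * (4*p^3 - 7*p^4 + 4*p^6 - p^8)"
proof -
  have eq: "(p / real (n choose 2))^2 * (real (n choose 2) * (E1 n p + real ((n choose 2) - 1 - ((n-2) choose 2)) * E2 n p + real ((n-2) choose 2) * E3 n p) - (real (n choose 2) * E1 n p)^2) + ((5*real n^2 - 23*real n + 26) * (p^6 * ((1-p)^2 * (1-p^2)^(2*n-6)))) / real (n choose 2) = 
      real (n - 2) / real (n choose 2) * p^4 * (1 - p) * (1 - p^2)^(n - 3)
        * (1 - p^2 * (1 - p) * (1 - p^2)^(n - 3))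
    + 4 * real ((n - 2) choose 2) / real (n choose 2) * p^5 * (1 - p)^2
        * ((1 - 2*p^2 + p^3)^(n - 4) - p * (1 - p^2)^(2*n - 6))
    + 4 * real ((n - 2) choose 2) / real (n choose 2) * p^5 * (1 - p)^2
        * (1 - p^2)^(2*n - 8) * (1 - p - p * (1 - p^2)^2)
    + 12 * real ((n - 2) choose 3) / real (n choose 2) * p^6 * (1 - p)^2
        * ((1 - p)^(n - 3) * (1 + p - p^2)^(n - 5) - (1 - p^2)^(2*n - 6))
    + 12 * real ((n - 2) choose 3) / real (n choose 2) * p^6 * (1 - p)^2
        * (1 - p^2)^(2*n - 9) * (- 2*p + 4*p^2 - 3*p^4 + p^6)
    + 3 * real ((n - 2) choose 3) / real (n choose 2) * p^6 * (1 - p)^2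
        * (1 - p^2)^(2*n - 10) * (4*p^3 - 7*p^4 + 4*p^6 - p^8)
    + 12 * real ((n - 2) choose 4) / real (n choose 2) * p^6 * (1 - p)^2
        * (1 - p^2)^(2*n - 10) * (4*p^3 - 7*p^4 + 4*p^6 - p^8)"
  proof (cases "n \<le> 5")
    case True
    hence "n = 2 \<or> n = 3 \<or> n = 4 \<or> n = 5" using assms(1) by auto
    thus ?thesis using small_case2 small_case3 small_case4 small_case5 by blast
  next
    case False
    hence "n = (n - 6) + 6" by simp
    thus ?thesis by (rule big_case)
  qed
  have cn: "5*real n^2 - 23*real n + 26 \<ge> 0"
  proof (cases "n = 2")
    case True thus ?thesis by simp
  next
    case False
    hence n3: "real n \<ge> 3" using assms(1) by simp
    have "5*real n^2 - 23*real n + 26 = (real n - 2) * (5 * real n - 13)" by (simp add: algebra_simps power2_eq_square)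
    also have "\<dots> \<ge> 0" using n3 by (intro mult_nonneg_nonneg) auto
    finally show ?thesis .
  qed
  have q0: "1 - p^2 \<ge> 0" using assms(2,3) by (simp add: power_le_one abs_le_iff power2_le_iff_abs_le)
  have SL0: "((5*real n^2 - 23*real n + 26) * (p^6 * ((1-p)^2 * (1-p^2)^(2*n-6)))) / real (n choose 2) \<ge> 0"
    using cn q0 by (intro divide_nonneg_nonneg mult_nonneg_nonneg) auto
  have "measure_pmf.variance (gnp n p) (Q1 n p) = (p / real (n choose 2))^2 * (real (n choose 2) * (E1 n p + real ((n choose 2) - 1 - ((n-2) choose 2)) * E2 n p + real ((n-2) choose 2) * E3 n p) - (real (n choose 2) * E1 n p)^2)"
    by (rule var_exact[OF assms])
  thus ?thesis using eq SL0 by linarith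
qed

end
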